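(* Let $p$ be an odd prime, let $q\in\mathbb{C}_p$ with $|1-q|_p<1$, let $h\in\mathbb{Z}$, $r\in\mathbb{N}$, $n\ge 0$, and let $w_1,w_2\in\mathbb{N}$ with $w_1\equiv 1\pmod 2$ and $w_2\equiv 1\pmod 2$. Then, for $x\in\mathbb{Z}_p$, \[ \sum_{i=0}^{n}\binom{n}{i}[w_2]_q^{i}[w_1]_q^{n-i}E_{n-i,q^{w_1}}^{(h,r)}(w_2x)\,T_{n,i,q^{w_2}}^{(h,r)}(w_1) =\sum_{i=0}^{n}\binom{n}{i}[w_1]_q^{i}[w_2]_q^{n-i}E_{n-i,q^{w_2}}^{(h,r)}(w_1x)\,T_{n,i,q^{w_1}}^{(h,r)}(w_2), \] where for $w\in\mathbb{N}$, \[ T_{n,i,q}^{(h,r)}(w)=\sum_{j_1,\dots,j_r=0}^{w-1}(-1)^{\sum_{l=1}^r j_l}\,q^{\sum_{l=1}^r(n+h-l-i)j_l}\,[j_1+\cdots+j_r]_q^i . \]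
   Context: $\mathbb{Z}_p$ denotes the $p$-adic integers and $\mathbb{C}_p$ the completion of the algebraic closure of $\mathbb{Q}_p$. For $q\in\mathbb{C}_p$ with $|1-q|_p<1$, the $q$-number is $[x]_q=\frac{1-q^x}{1-q}$, and $[x]_{q^w}=\frac{1-q^{wx}}{1-q^w}$. For a continuous function $f$ on $\mathbb{Z}_p$, the $p$-adic fermionic integral is $\int_{\mathbb{Z}_p}f(y)\,d\mu_{-1}(y)=\lim_{N\to\infty}\sum_{y=0}^{p^N-1}f(y)(-1)^y$; the multivariate integral over $y_1,\dots,y_r$ is the iterated one. For $h\in\mathbb{Z}$, $r\in\mathbb{N}$, the expansions of $q$-Euler polynomials are defined by \[ E_{n,q}^{(h,r)}(x)=\int_{\mathbb{Z}_p}\!\cdots\!\int_{\mathbb{Z}_p} q^{\sum_{l=1}^r(h-l)y_l}\,[x+y_1+\cdots+y_r]_q^n\,d\mu_{-1}(y_1)\cdots d\mu_{-1}(y_r), \] equivalently by the generating function $\sum_{n\ge0}E_{n,q}^{(h,r)}(x)\frac{t^n}{n!}=2^r\sum_{m_1,\dots,m_r=0}^{\infty}q^{\sum_{l=1}^r(h-l)m_l}(-1)^{\sum_{l=1}^r m_l}e^{[x+m_1+\cdots+m_r]_q t}$; $E_{n,q^w}^{(h,r)}$ denotes the same with $q$ replaced by $q^w$. *)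

theory Defs
  imports "HOL-Computational_Algebra.Polynomial" "HOL-Library.FuncSet"
begin

text \<open>An abstract model of C_p: a field of characteristic 0 with a non-archimedean
absolute value absv, complete, algebraically closed, in which the algebraic numbers
are dense, and with absv p = 1/p. These conditions characterise C_p up to
isometric isomorphism.\<close>

definition conv_abs :: "('a::field \<Rightarrow> real) \<Rightarrow> (nat \<Rightarrow> 'a) \<Rightarrow> 'a \<Rightarrow> bool" where
  "conv_abs absv X L \<longleftrightarrow> (\<forall>e>0. \<exists>M. \<forall>n\<ge>M. absv (X n - L) < e)"

definition cauchy_abs :: "('a::field \<Rightarrow> real) \<Rightarrow> (nat \<Rightarrow> 'a) \<Rightarrow> bool" where
  "cauchy_abs absv X \<longleftrightarrow> (\<forall>e>0. \<exists>M. \<forall>m\<ge>M. \<forall>n\<ge>M. absv (X m - X n) < e)"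

definition is_Cp :: "nat \<Rightarrow> ('a::field_char_0 \<Rightarrow> real) \<Rightarrow> bool" where
  "is_Cp p absv \<longleftrightarrow>
     (\<forall>x. absv x \<ge> 0) \<and>
     (\<forall>x. absv x = 0 \<longleftrightarrow> x = 0) \<and>
     (\<forall>x y. absv (x * y) = absv x * absv y) \<and>
     (\<forall>x y. absv (x + y) \<le> max (absv x) (absv y)) \<and>
     absv (of_nat p) = 1 / real p \<and>
     (\<forall>X. cauchy_abs absv X \<longrightarrow> (\<exists>L. conv_abs absv X L)) \<and>
     (\<forall>P :: 'a poly. degree P \<ge> 1 \<longrightarrow> (\<exists>z. poly P z = 0)) \<and>
     (\<forall>x e. e > 0 \<longrightarrow> (\<exists>y. (\<exists>P :: int poly. P \<noteq> 0 \<and> poly (map_poly of_int P) y = 0)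
                                \<and> absv (x - y) < e))"

definition Zp :: "('a::field \<Rightarrow> real) \<Rightarrow> 'a set" where
  "Zp absv = {x. \<exists>s :: nat \<Rightarrow> int. conv_abs absv (\<lambda>k. of_int (s k)) x}"

definition qpow :: "('a::field \<Rightarrow> real) \<Rightarrow> 'a \<Rightarrow> 'a \<Rightarrow> 'a" where
  "qpow absv q x = (THE y. \<forall>s :: nat \<Rightarrow> int.
       conv_abs absv (\<lambda>k. of_int (s k)) x \<longrightarrow> conv_abs absv (\<lambda>k. q powi (s k)) y)"

definition qnum :: "('a::field \<Rightarrow> real) \<Rightarrow> 'a \<Rightarrow> 'a \<Rightarrow> 'a" where
  "qnum absv q x = (if q = 1 then x else (1 - qpow absv q x) / (1 - q))"

definition fint :: "nat \<Rightarrow> ('a::field \<Rightarrow> real) \<Rightarrow> ('a \<Rightarrow> 'a) \<Rightarrow> 'a" where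
  "fint p absv f = (THE L. conv_abs absv (\<lambda>N. \<Sum>y<p ^ N. f (of_nat y) * (-1) ^ y) L)"

text \<open>Iterated fermionic integral over y_1,...,y_k (y_1 innermost); ys l is y_l.\<close>
fun fmint :: "nat \<Rightarrow> ('a::field \<Rightarrow> real) \<Rightarrow> nat \<Rightarrow> ((nat \<Rightarrow> 'a) \<Rightarrow> 'a) \<Rightarrow> (nat \<Rightarrow> 'a) \<Rightarrow> 'a" where
  "fmint p absv 0 F ys = F ys"
| "fmint p absv (Suc k) F ys = fint p absv (\<lambda>y. fmint p absv k F (ys(Suc k := y)))"

definition Eqhr :: "nat \<Rightarrow> ('a::field \<Rightarrow> real) \<Rightarrow> nat \<Rightarrow> 'a \<Rightarrow> int \<Rightarrow> nat \<Rightarrow> 'a \<Rightarrow> 'a" where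
  "Eqhr p absv n q h r x =
     fmint p absv r
       (\<lambda>ys. qpow absv q (\<Sum>l=1..r. of_int (h - int l) * ys l)
             * qnum absv q (x + (\<Sum>l=1..r. ys l)) ^ n) (\<lambda>_. 0)"

definition Tqhr :: "('a::field \<Rightarrow> real) \<Rightarrow> nat \<Rightarrow> nat \<Rightarrow> 'a \<Rightarrow> int \<Rightarrow> nat \<Rightarrow> nat \<Rightarrow> 'a" where
  "Tqhr absv n i q h r w =
     (\<Sum>j\<in>{1..r} \<rightarrow>\<^sub>E {0..<w}.
        (-1) ^ (\<Sum>l=1..r. j l)
        * q powi (\<Sum>l=1..r. (int n + h - int l - int i) * int (j l))
        * qnum absv q (of_nat (\<Sum>l=1..r. j l)) ^ i)"

end

theory Submission
  imports Defs
begin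

locale cpx =
  fixes p :: nat and absv :: "'a::field_char_0 \<Rightarrow> real"
  assumes Cp: "is_Cp p absv" and pr: "prime p" and od: "odd p"
begin

abbreviation conv where "conv \<equiv> conv_abs absv"

lemma ab_nonneg: "absv x \<ge> 0" using Cp unfolding is_Cp_def by blast
lemma ab_zero: "absv x = 0 \<longleftrightarrow> x = 0" using Cp unfolding is_Cp_def by blast
lemma ab_mult: "absv (x * y) = absv x * absv y" using Cp unfolding is_Cp_def by blast
lemma ab_ultra: "absv (x + y) \<le> max (absv x) (absv y)" using Cp unfolding is_Cp_def by blast
lemma ab_p: "absv (of_nat p) = 1 / real p" using Cp unfolding is_Cp_def by blast
lemma complete: "cauchy_abs absv X \<Longrightarrow> \<exists>L. conv X L" using Cp unfolding is_Cp_def by blast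

lemma p_gt1: "p > 1" using pr prime_gt_1_nat by blast

lemma ab_0[simp]: "absv 0 = 0" using ab_zero by simp

lemma ab_one: "absv 1 = 1"
proof -
  have "absv 1 = absv 1 * absv 1" using ab_mult[of 1 1] by simp
  moreover have "absv 1 \<noteq> 0" using ab_zero by simp
  ultimately show ?thesis by (metis mult_cancel_left1)
qed

lemma ab_m1: "absv (-1) = 1"
proof -
  have "absv (-1) * absv (-1) = 1" using ab_mult[of "-1" "-1"] ab_one by simp
  then have "sqrt (absv (-1) * absv (-1)) = 1" by simp
  then show ?thesis using ab_nonneg[of "-1"] by (simp add: real_sqrt_mult_self)
qed

lemma ab_uminus: "absv (- x) = absv x"
  using ab_mult[of "-1" x] ab_m1 by simp

lemma ab_sym: "absv (x - y) = absv (y - x)"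
  using ab_uminus[of "x - y"] by simp

lemma ab_diff: "absv (x - y) \<le> max (absv x) (absv y)"
  using ab_ultra[of x "-y"] ab_uminus[of y] by simp

lemma ab_tri: "absv (x - z) \<le> max (absv (x - y)) (absv (y - z))"
  using ab_ultra[of "x - y" "y - z"] by simp

lemma ab_power: "absv (x ^ n) = absv x ^ n"
  by (induction n) (auto simp: ab_one ab_mult)

lemma ab_inverse: "absv (inverse x) = inverse (absv x)"
proof (cases "x = 0")
  case True then show ?thesis using ab_zero by simp
next
  case False
  have "absv x * absv (inverse x) = 1" using ab_mult[of x "inverse x"] False ab_one by simp
  from inverse_unique[OF this] show ?thesis by simp
qed

lemma ab_divide: "absv (x / y) = absv x / absv y"
  by (simp add: divide_inverse ab_mult ab_inverse)

lemma ab_of_nat: "absv (of_nat n) \<le> 1"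
proof (induction n)
  case 0 then show ?case using ab_zero by simp
next
  case (Suc n)
  have "absv (of_nat n + 1) \<le> max (absv (of_nat n)) (absv 1)" by (rule ab_ultra)
  then show ?case using Suc ab_one by (simp add: add.commute)
qed

lemma ab_of_int: "absv (of_int m) \<le> 1"
proof (cases "m \<ge> 0")
  case True then show ?thesis using ab_of_nat[of "nat m"] by simp
next
  case False
  then have "(of_int m :: 'a) = - of_nat (nat (-m))" by simp
  then show ?thesis using ab_of_nat[of "nat (-m)"] ab_uminus by simp
qed

lemma ab_sum_le:
  assumes "finite I" "\<And>i. i \<in> I \<Longrightarrow> absv (f i) \<le> B" "0 \<le> B"
  shows "absv (sum f I) \<le> B"
  using assms
proof (induction I rule: finite_induct)
  case empty then show ?case using ab_zero by simp
next
  case (insert x F)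
  have 1: "absv (sum f (insert x F)) \<le> max (absv (f x)) (absv (sum f F))"
    using ab_ultra insert.hyps by simp
  have "absv (f x) \<le> B" using insert.prems by simp
  moreover have "absv (sum f F) \<le> B" using insert by simp
  ultimately have "max (absv (f x)) (absv (sum f F)) \<le> B" by simp
  with 1 show ?case by (rule order_trans)
qed

lemma ab_sum_lt:
  assumes "finite I" "\<And>i. i \<in> I \<Longrightarrow> absv (f i) < e" "0 < e"
  shows "absv (sum f I) < e"
  using assms
proof (induction I rule: finite_induct)
  case empty then show ?case using ab_zero by simp
next
  case (insert x F)
  have 1: "absv (sum f (insert x F)) \<le> max (absv (f x)) (absv (sum f F))"
    using ab_ultra insert.hyps by simp
  have "absv (f x) < e" using insert.prems by simp
  moreover have "absv (sum f F) < e" using insert by simp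
  ultimately have "max (absv (f x)) (absv (sum f F)) < e" by simp
  with 1 show ?case by (rule le_less_trans)
qed

lemma ab_int_dvd:
  assumes "int (p ^ N) dvd m" shows "absv (of_int m :: 'a) \<le> (1 / real p) ^ N"
proof -
  obtain k where k: "m = int (p ^ N) * k" using assms by blast
  have "absv (of_int m :: 'a) = absv ((of_nat p :: 'a) ^ N) * absv (of_int k :: 'a)"
    by (simp add: k ab_mult[symmetric])
  also have "\<dots> = (1 / real p) ^ N * absv (of_int k :: 'a)" by (simp add: ab_power ab_p)
  also have "\<dots> \<le> (1 / real p) ^ N" using ab_of_int[of k] by (simp add: mult_left_le)
  finally show ?thesis .
qed

lemma ab_coprime:
  assumes "\<not> int p dvd m" shows "absv (of_int m :: 'a) = 1"
proof -
  have "prime (int p)" using pr by simp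
  then have "coprime (int p) m" using assms prime_imp_coprime by blast
  then obtain u v where uv: "u * int p + v * m = 1"
    using bezout_int[of "int p" m] by auto
  have "(of_int (u * int p + v * m) :: 'a) = 1" using uv by simp
  then have eq: "of_int u * of_nat p + of_int v * of_int m = (1::'a)" by simp
  have "1 \<le> max (absv (of_int u * (of_nat p :: 'a))) (absv (of_int v * (of_int m :: 'a)))"
    using ab_ultra[of "of_int u * (of_nat p :: 'a)" "of_int v * of_int m"] ab_one by (simp only: eq)
  moreover have "absv (of_int u * (of_nat p :: 'a)) \<le> 1 / real p"
    using ab_of_int[of u] ab_p ab_mult by (simp add: divide_right_mono)
  moreover have "1 / real p < 1" using p_gt1 by simp
  moreover have "absv (of_int v * (of_int m :: 'a)) \<le> absv (of_int m :: 'a)"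
    using ab_of_int[of v] ab_mult ab_nonneg by (simp add: mult_left_le_one_le)
  ultimately have "absv (of_int m :: 'a) \<ge> 1" by linarith
  then show ?thesis using ab_of_int[of m] by simp
qed

lemma ab_small_dvd:
  assumes "absv (of_int m :: 'a) < (1 / real p) ^ N" shows "int (p ^ N) dvd m"
  using assms
proof (induction N arbitrary: m)
  case 0 then show ?case by simp
next
  case (Suc N)
  have pp: "0 < 1 / real p" "1 / real p < 1" using p_gt1 by auto
  show ?case
  proof (cases "int p dvd m")
    case True
    then obtain k where k: "m = int p * k" by blast
    have "absv (of_int m :: 'a) = (1 / real p) * absv (of_int k :: 'a)"
      by (simp add: k ab_mult ab_p)
    with Suc.prems have "absv (of_int k :: 'a) < (1 / real p) ^ N"
      using pp p_gt1 by (simp add: divide_less_cancel)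
    then have "int (p ^ N) dvd k" by (rule Suc.IH)
    then show ?thesis by (simp add: k)
  next
    case False
    then have "absv (of_int m :: 'a) = 1" by (rule ab_coprime)
    moreover have "(1 / real p) ^ Suc N \<le> 1" using pp by (intro power_le_one) auto
    ultimately have False using Suc.prems by linarith
    then show ?thesis ..
  qed
qed

end

context cpx begin

lemma convD: "conv X L \<Longrightarrow> e > 0 \<Longrightarrow> \<exists>M. \<forall>n\<ge>M. absv (X n - L) < e"
  unfolding conv_abs_def by blast

lemma convI: "(\<And>e. e > 0 \<Longrightarrow> \<exists>M. \<forall>n\<ge>M. absv (X n - L) < e) \<Longrightarrow> conv X L"
  unfolding conv_abs_def by blast

lemma conv_unique: assumes "conv X L" "conv X L'" shows "L = L'"
proof (rule ccontr)
  assume "L \<noteq> L'"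
  then have d: "absv (L - L') > 0" using ab_zero ab_nonneg by (metis eq_iff_diff_eq_0 less_eq_real_def)
  obtain M1 where M1: "\<forall>n\<ge>M1. absv (X n - L) < absv (L - L')" using convD[OF assms(1) d] by blast
  obtain M2 where M2: "\<forall>n\<ge>M2. absv (X n - L') < absv (L - L')" using convD[OF assms(2) d] by blast
  let ?n = "max M1 M2"
  have "absv (L - L') \<le> max (absv (L - X ?n)) (absv (X ?n - L'))" by (rule ab_tri)
  moreover have "absv (L - X ?n) < absv (L - L')" using M1 ab_sym by (metis max.cobounded1)
  moreover have "absv (X ?n - L') < absv (L - L')" using M2 by simp
  ultimately show False by simp
qed

lemma conv_const: "conv (\<lambda>n. c) c"
  by (rule convI) auto

lemma conv_add: assumes "conv X L" "conv Y L2" shows "conv (\<lambda>n. X n + Y n) (L + L2)"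
proof (rule convI)
  fix e :: real assume e: "e > 0"
  obtain M1 where M1: "\<forall>n\<ge>M1. absv (X n - L) < e" using convD[OF assms(1) e] by blast
  obtain M2 where M2: "\<forall>n\<ge>M2. absv (Y n - L2) < e" using convD[OF assms(2) e] by blast
  have "\<forall>n\<ge>max M1 M2. absv (X n + Y n - (L + L2)) < e"
  proof (intro allI impI)
    fix n assume "n \<ge> max M1 M2"
    then have "absv (X n - L) < e" "absv (Y n - L2) < e" using M1 M2 by auto
    moreover have "absv ((X n - L) + (Y n - L2)) \<le> max (absv (X n - L)) (absv (Y n - L2))" by (rule ab_ultra)
    moreover have "X n + Y n - (L + L2) = (X n - L) + (Y n - L2)" by simp
    ultimately show "absv (X n + Y n - (L + L2)) < e" by (metis le_less_trans max_less_iff_conj)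
  qed
  then show "\<exists>M. \<forall>n\<ge>M. absv (X n + Y n - (L + L2)) < e" by blast
qed

lemma conv_cmult: assumes "conv X L" shows "conv (\<lambda>n. c * X n) (c * L)"
proof (cases "c = 0")
  case True then show ?thesis using conv_const by simp
next
  case False
  then have cpos: "absv c > 0" using ab_zero ab_nonneg by (metis less_eq_real_def)
  show ?thesis
  proof (rule convI)
    fix e :: real assume e: "e > 0"
    obtain M where M: "\<forall>n\<ge>M. absv (X n - L) < e / absv c" using convD[OF assms, of "e / absv c"] e cpos by auto
    have "\<forall>n\<ge>M. absv (c * X n - c * L) < e"
    proof (intro allI impI)
      fix n assume "n \<ge> M"
      then have "absv (X n - L) < e / absv c" using M by simp
      then have "absv c * absv (X n - L) < e" using cpos by (simp add: field_simps)
      moreover have "c * X n - c * L = c * (X n - L)" by (simp add: algebra_simps)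
      ultimately show "absv (c * X n - c * L) < e" by (simp add: ab_mult)
    qed
    then show "\<exists>M. \<forall>n\<ge>M. absv (c * X n - c * L) < e" by blast
  qed
qed

lemma conv_sum: assumes "finite I" "\<And>i. i \<in> I \<Longrightarrow> conv (X i) (L i)"
  shows "conv (\<lambda>n. \<Sum>i\<in>I. X i n) (\<Sum>i\<in>I. L i)"
  using assms
proof (induction I rule: finite_induct)
  case empty then show ?case using conv_const by simp
next
  case (insert x F)
  then have "conv (\<lambda>n. X x n + (\<Sum>i\<in>F. X i n)) (L x + (\<Sum>i\<in>F. L i))"
    by (intro conv_add) auto
  then show ?case using insert.hyps by simp
qed

lemma conv_diff0: assumes "conv X L" "conv (\<lambda>n. X n - Y n) 0" shows "conv Y L"
proof -
  have "conv (\<lambda>n. X n + (-1) * (X n - Y n)) (L + (-1) * 0)"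
    by (intro conv_add conv_cmult assms)
  then show ?thesis by simp
qed

lemma conv_bound: assumes "conv X L" "\<And>n. absv (X n) \<le> B" shows "absv L \<le> B"
proof (rule ccontr)
  assume "\<not> absv L \<le> B"
  then have d: "absv L - B > 0" by simp
  obtain M where M: "\<forall>n\<ge>M. absv (X n - L) < absv L - B" using convD[OF assms(1) d] by blast
  have "absv L \<le> max (absv (L - X M)) (absv (X M))" using ab_ultra[of "L - X M" "X M"] by simp
  moreover have "absv (L - X M) < absv L - B" using M ab_sym by (metis order_refl)
  moreover have "absv (X M) \<le> B" by (rule assms(2))
  moreover have "0 \<le> B" using assms(2)[of 0] ab_nonneg[of "X 0"] by simp
  ultimately show False using d unfolding max_def by (auto split: if_splits)
qed

lemma conv_close: assumes "conv X L" "conv Y L'" "\<And>n. absv (X n - Y n) \<le> c"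
  shows "absv (L - L') \<le> c"
proof -
  have "conv (\<lambda>n. X n + (-1) * Y n) (L + (-1) * L')"
    by (intro conv_add conv_cmult assms)
  then have "conv (\<lambda>n. X n - Y n) (L - L')" by simp
  then show ?thesis using conv_bound assms(3) by blast
qed

lemma cauchy_diff:
  assumes "\<And>e. e > 0 \<Longrightarrow> \<exists>M. \<forall>n\<ge>M. absv (X (Suc n) - X n) < e"
  shows "\<exists>L. conv X L"
proof -
  have c: "cauchy_abs absv X" unfolding cauchy_abs_def
  proof (intro allI impI)
    fix e :: real assume e: "e > 0"
    obtain M where M: "\<forall>n\<ge>M. absv (X (Suc n) - X n) < e" using assms[OF e] by blast
    have key: "absv (X m - X n) < e" if "n \<le> m" "M \<le> n" for m n
    proof -
      have "X m - X n = (\<Sum>i = n..<m. X (Suc i) - X i)" using that sum_Suc_diff'[of n m X] by simp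
      moreover have "absv (\<Sum>i = n..<m. X (Suc i) - X i) < e"
        using M that e by (intro ab_sum_lt) auto
      ultimately show ?thesis by simp
    qed
    have "\<forall>m\<ge>M. \<forall>n\<ge>M. absv (X m - X n) < e"
    proof (intro allI impI)
      fix m n assume "m \<ge> M" "n \<ge> M"
      then show "absv (X m - X n) < e"
        using key[of n m] key[of m n] ab_sym[of "X m" "X n"] by (cases "n \<le> m") auto
    qed
    then show "\<exists>M. \<forall>m\<ge>M. \<forall>n\<ge>M. absv (X m - X n) < e" by blast
  qed
  then show ?thesis by (rule complete)
qed

end

context cpx begin

definition fS :: "('a \<Rightarrow> 'a) \<Rightarrow> nat \<Rightarrow> 'a" where
  "fS f N = (\<Sum>y<p ^ N. f (of_nat y) * (-1) ^ y)"

definition UC1 :: "('a \<Rightarrow> 'a) \<Rightarrow> bool" where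
  "UC1 f \<longleftrightarrow> (\<forall>e>0. \<exists>N. \<forall>a b. int (p ^ N) dvd (int b - int a) \<longrightarrow>
      absv (f (of_nat a) - f (of_nat b)) < e)"

lemma fint_eq: assumes "conv (fS f) L" shows "fint p absv f = L"
proof -
  have e: "(\<lambda>N. \<Sum>y<p ^ N. f (of_nat y) * (-1) ^ y) = fS f" by (simp add: fS_def fun_eq_iff)
  show ?thesis unfolding fint_def e
    using assms conv_unique by (intro the_equality) auto
qed

lemma fint_cong: assumes "\<And>n. f (of_nat n) = g (of_nat n)" shows "fint p absv f = fint p absv g"
  unfolding fint_def using assms by simp

lemma sum_lessThan_add: "(\<Sum>y<(a::nat)+b. g y) = (\<Sum>y<a. g y) + (\<Sum>y<b. g (a + y))"
  by (induction b) (auto simp: add.assoc)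

lemma sum_split: "(\<Sum>y<(m::nat)*n. g y) = (\<Sum>k<m. \<Sum>a<n. g (a + k*n))"
proof (induction m)
  case 0 then show ?case by simp
next
  case (Suc m)
  have "Suc m * n = m * n + n" by simp
  then have "(\<Sum>y<Suc m * n. g y) = (\<Sum>y<m*n. g y) + (\<Sum>a<n. g (m * n + a))"
    by (simp only: sum_lessThan_add)
  then show ?case using Suc by (simp add: add.commute)
qed

lemma altsum: assumes "odd w" shows "(\<Sum>k<w. (-1::'a) ^ k) = 1"
proof -
  obtain m where m: "w = Suc (2 * m)" using assms oddE by (metis Suc_eq_plus1)
  have "(\<Sum>k<Suc (2 * m). (-1::'a) ^ k) = 1"
    by (induction m) (auto simp: power_add)
  then show ?thesis using m by simp
qed

lemma neg1_mult: assumes "odd M" shows "(-1::'a) ^ (k * M) = (-1) ^ k"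
proof -
  obtain j where j: "M = 2 * j + 1" using assms oddE by blast
  have "k * M = k + 2 * (k * j)" using j by (simp add: algebra_simps)
  then show ?thesis by (simp add: power_add power_mult)
qed

lemma ab_sign: "absv ((-1) ^ a * (-1) ^ k * x) = absv x"
  by (simp add: ab_mult ab_power ab_m1)

lemma Dlemma:
  assumes "odd w" "odd M"
  shows "(\<Sum>y<w*M. \<phi> y * (-1::'a) ^ y) - (\<Sum>a<M. \<phi> a * (-1) ^ a)
       = (\<Sum>a<M. \<Sum>k<w. (-1) ^ a * (-1) ^ k * (\<phi> (a + k*M) - \<phi> a))"
proof -
  have 1: "(\<Sum>y<w*M. \<phi> y * (-1::'a) ^ y) = (\<Sum>a<M. \<Sum>k<w. (-1) ^ a * (-1) ^ k * \<phi> (a + k*M))"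
    unfolding sum_split
    by (subst sum.swap) (simp add: power_add neg1_mult[OF assms(2)] mult_ac)
  have 2: "(\<Sum>a<M. \<phi> a * (-1::'a) ^ a) = (\<Sum>a<M. \<Sum>k<w. (-1) ^ a * (-1) ^ k * \<phi> a)"
  proof -
    have "(\<Sum>a<M. \<Sum>k<w. (-1::'a) ^ a * (-1) ^ k * \<phi> a) = (\<Sum>a<M. ((-1) ^ a * \<phi> a) * (\<Sum>k<w. (-1) ^ k))"
      by (simp add: sum_distrib_left mult_ac)
    then show ?thesis using altsum[OF assms(1)] by (simp add: mult_ac)
  qed
  show ?thesis unfolding 1 2 by (simp add: sum_subtractf right_diff_distrib)
qed

lemma odd_ppow: "odd (p ^ N)" using od by simp

lemma fS_exists: assumes "UC1 f" shows "\<exists>L. conv (fS f) L"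
proof (rule cauchy_diff)
  fix e :: real assume e: "e > 0"
  obtain N0 where N0: "\<forall>a b. int (p ^ N0) dvd (int b - int a) \<longrightarrow> absv (f (of_nat a) - f (of_nat b)) < e"
    using assms e unfolding UC1_def by blast
  have "\<forall>N\<ge>N0. absv (fS f (Suc N) - fS f N) < e"
  proof (intro allI impI)
    fix N assume N: "N \<ge> N0"
    have "fS f (Suc N) - fS f N = (\<Sum>a<p^N. \<Sum>k<p. (-1) ^ a * (-1) ^ k * (f (of_nat (a + k * p^N)) - f (of_nat a)))"
      unfolding fS_def power_Suc using Dlemma[OF od odd_ppow, of "\<lambda>y. f (of_nat y)" N] by simp
    also have "absv \<dots> < e"
    proof (intro ab_sum_lt e)
      fix a k
      have "int (p ^ N0) dvd int (p ^ N)" using N by (simp add: le_imp_power_dvd)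
      then have "int (p ^ N0) dvd (int a - int (a + k * p ^ N))" by simp
      then have "absv (f (of_nat (a + k * p ^ N)) - f (of_nat a)) < e" using N0 by blast
      then show "absv ((-1) ^ a * (-1) ^ k * (f (of_nat (a + k * p ^ N)) - f (of_nat a))) < e"
        by (simp only: ab_sign)
    qed auto
    finally show "absv (fS f (Suc N) - fS f N) < e" .
  qed
  then show "\<exists>M. \<forall>n\<ge>M. absv (fS f (Suc n) - fS f n) < e" by blast
qed

lemma fint_conv: assumes "UC1 f" shows "conv (fS f) (fint p absv f)"
  using fS_exists[OF assms] fint_eq by auto

lemma fint_lin:
  assumes "finite I" "\<And>i. i \<in> I \<Longrightarrow> UC1 (f i)"
  shows "fint p absv (\<lambda>y. \<Sum>i\<in>I. c i * f i y) = (\<Sum>i\<in>I. c i * fint p absv (f i))"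
proof (rule fint_eq)
  have "fS (\<lambda>y. \<Sum>i\<in>I. c i * f i y) = (\<lambda>N. \<Sum>i\<in>I. c i * fS (f i) N)"
    by (simp add: fun_eq_iff fS_def sum_distrib_left sum_distrib_right mult_ac sum.swap[of _ I])
  moreover have "conv (\<lambda>N. \<Sum>i\<in>I. c i * fS (f i) N) (\<Sum>i\<in>I. c i * fint p absv (f i))"
    using assms by (intro conv_sum conv_cmult fint_conv) auto
  ultimately show "conv (fS (\<lambda>y. \<Sum>i\<in>I. c i * f i y)) (\<Sum>i\<in>I. c i * fint p absv (f i))" by simp
qed

lemma fint_mult1:
  assumes "UC1 f" "odd w"
  shows "fint p absv f = (\<Sum>t<w. (-1) ^ t * fint p absv (\<lambda>y. f (of_nat t + of_nat w * y)))"
proof (rule fint_eq)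
  define g where "g t = (\<lambda>y. f (of_nat t + of_nat w * y))" for t
  have gn: "g t (of_nat k) = f (of_nat (t + k * w))" for t k by (simp add: g_def algebra_simps)
  have ucg: "UC1 (g t)" for t unfolding UC1_def
  proof (intro allI impI)
    fix e :: real assume e: "e > 0"
    obtain N where N: "\<forall>a b. int (p ^ N) dvd (int b - int a) \<longrightarrow> absv (f (of_nat a) - f (of_nat b)) < e"
      using assms(1) e unfolding UC1_def by blast
    have "\<forall>a b. int (p ^ N) dvd (int b - int a) \<longrightarrow> absv (g t (of_nat a) - g t (of_nat b)) < e"
    proof (intro allI impI)
      fix a b assume "int (p ^ N) dvd (int b - int a)"
      then have "int (p ^ N) dvd (int (t + b * w) - int (t + a * w))"
        by (metis (no_types, lifting) add_diff_cancel_left dvd_mult2 int_distrib(3) of_nat_add of_nat_mult)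
      then have "absv (f (of_nat (t + a * w)) - f (of_nat (t + b * w))) < e" using N by blast
      then show "absv (g t (of_nat a) - g t (of_nat b)) < e" by (simp only: gn)
    qed
    then show "\<exists>N. \<forall>a b. int (p ^ N) dvd (int b - int a) \<longrightarrow> absv (g t (of_nat a) - g t (of_nat b)) < e"
      by blast
  qed
  define U where "U N = (\<Sum>y<w * p ^ N. f (of_nat y) * (-1) ^ y)" for N
  have U1: "U N = (\<Sum>t<w. (-1) ^ t * fS (g t) N)" for N
  proof -
    have "U N = (\<Sum>k<p^N. \<Sum>t<w. f (of_nat (t + k * w)) * (-1) ^ (t + k * w))"
      unfolding U_def by (subst mult.commute) (rule sum_split)
    also have "\<dots> = (\<Sum>k<p^N. \<Sum>t<w. (-1) ^ t * (g t (of_nat k) * (-1) ^ k))"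
      by (simp add: gn power_add neg1_mult[OF assms(2)] mult_ac)
    also have "\<dots> = (\<Sum>t<w. (-1) ^ t * fS (g t) N)"
      by (subst sum.swap) (simp add: fS_def sum_distrib_left)
    finally show ?thesis .
  qed
  have cU: "conv U (\<Sum>t<w. (-1) ^ t * fint p absv (g t))"
    unfolding U1 by (intro conv_sum conv_cmult fint_conv ucg) auto
  have cD: "conv (\<lambda>N. U N - fS f N) 0"
  proof (rule convI)
    fix e :: real assume e: "e > 0"
    obtain N0 where N0: "\<forall>a b. int (p ^ N0) dvd (int b - int a) \<longrightarrow> absv (f (of_nat a) - f (of_nat b)) < e"
      using assms e unfolding UC1_def by blast
    have "\<forall>N\<ge>N0. absv (U N - fS f N - 0) < e"
    proof (intro allI impI)
      fix N assume N: "N \<ge> N0"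
      have "U N - fS f N = (\<Sum>a<p^N. \<Sum>k<w. (-1) ^ a * (-1) ^ k * (f (of_nat (a + k * p^N)) - f (of_nat a)))"
        unfolding fS_def U_def using Dlemma[OF assms(2) odd_ppow, of "\<lambda>y. f (of_nat y)" N] by simp
      also have "absv \<dots> < e"
      proof (intro ab_sum_lt e)
        fix a k
        have "int (p ^ N0) dvd int (p ^ N)" using N by (simp add: le_imp_power_dvd)
        then have "int (p ^ N0) dvd (int a - int (a + k * p ^ N))" by simp
        then have "absv (f (of_nat (a + k * p ^ N)) - f (of_nat a)) < e" using N0 by blast
        then show "absv ((-1) ^ a * (-1) ^ k * (f (of_nat (a + k * p ^ N)) - f (of_nat a))) < e"
          by (simp only: ab_sign)
      qed auto
      finally show "absv (U N - fS f N - 0) < e" by simp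
    qed
    then show "\<exists>M. \<forall>n\<ge>M. absv (U n - fS f n - 0) < e" by blast
  qed
  show "conv (fS f) (\<Sum>t<w. (-1) ^ t * fint p absv (\<lambda>y. f (of_nat t + of_nat w * y)))"
    using conv_diff0[OF cU cD] unfolding g_def by simp
qed

end

context cpx begin

definition UCb :: "((nat \<Rightarrow> nat) \<Rightarrow> 'a) \<Rightarrow> bool" where
  "UCb G \<longleftrightarrow> (\<exists>B. \<forall>a. absv (G a) \<le> B) \<and>
     (\<forall>e>0. \<exists>N. \<forall>a b. (\<forall>l. int (p ^ N) dvd (int (b l) - int (a l))) \<longrightarrow> absv (G a - G b) < e)"

definition nf :: "(nat \<Rightarrow> nat) \<Rightarrow> nat \<Rightarrow> 'a" where
  "nf a = (\<lambda>l. of_nat (a l))"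

definition Fn :: "((nat \<Rightarrow> 'a) \<Rightarrow> 'a) \<Rightarrow> (nat \<Rightarrow> nat) \<Rightarrow> 'a" where
  "Fn F = (\<lambda>a. F (nf a))"

lemma nf_upd: "(nf a)(j := of_nat n) = nf (a(j := n))"
  by (auto simp: nf_def fun_eq_iff)

lemma UCb_UC1:
  assumes "UCb G" "\<And>n. H (of_nat n) = G (a(j := n))"
  shows "UC1 H"
  unfolding UC1_def
proof (intro allI impI)
  fix e :: real assume e: "e > 0"
  obtain N where N: "\<forall>a b. (\<forall>l. int (p ^ N) dvd (int (b l) - int (a l))) \<longrightarrow> absv (G a - G b) < e"
    using assms(1) e unfolding UCb_def by blast
  have "\<forall>n1 n2. int (p ^ N) dvd (int n2 - int n1) \<longrightarrow> absv (H (of_nat n1) - H (of_nat n2)) < e"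
  proof (intro allI impI)
    fix n1 n2 assume d: "int (p ^ N) dvd (int n2 - int n1)"
    have "\<forall>l. int (p ^ N) dvd (int ((a(j := n2)) l) - int ((a(j := n1)) l))"
      using d by auto
    then show "absv (H (of_nat n1) - H (of_nat n2)) < e" using N assms(2) by simp
  qed
  then show "\<exists>N. \<forall>a b. int (p ^ N) dvd (int b - int a) \<longrightarrow> absv (H (of_nat a) - H (of_nat b)) < e"
    by blast
qed

lemma ab_sign1: "absv (x * (-1) ^ y) = absv x"
  by (simp add: ab_mult ab_power ab_m1)

lemma fmint_UC: assumes "UCb (Fn F)" shows "UCb (\<lambda>a. fmint p absv k F (nf a))"
proof (induction k)
  case 0 then show ?case using assms by (simp add: Fn_def)
next
  case (Suc k)
  define G where "G a = fmint p absv k F (nf a)" for a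
  have UG: "UCb G" using Suc unfolding G_def by simp
  define h where "h a = (\<lambda>y. fmint p absv k F ((nf a)(Suc k := y)))" for a
  have hn: "h a (of_nat n) = G (a(Suc k := n))" for a n by (simp add: h_def G_def nf_upd)
  have uch: "UC1 (h a)" for a using UCb_UC1[OF UG hn] .
  have eq: "fmint p absv (Suc k) F (nf a) = fint p absv (h a)" for a by (simp add: h_def)
  obtain B where B: "\<forall>a. absv (G a) \<le> B" using UG unfolding UCb_def by blast
  have B0: "0 \<le> B" using B ab_nonneg order_trans by blast
  have bnd: "absv (fint p absv (h a)) \<le> B" for a
  proof (rule conv_bound[OF fint_conv[OF uch]])
    fix N show "absv (fS (h a) N) \<le> B"
      unfolding fS_def using B B0 by (intro ab_sum_le) (auto simp: ab_sign1 hn)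
  qed
  have uc: "\<exists>N. \<forall>a b. (\<forall>l. int (p ^ N) dvd (int (b l) - int (a l))) \<longrightarrow>
      absv (fint p absv (h a) - fint p absv (h b)) < e" if e: "e > 0" for e
  proof -
    obtain N where N: "\<forall>a b. (\<forall>l. int (p ^ N) dvd (int (b l) - int (a l))) \<longrightarrow> absv (G a - G b) < e / 2"
      using UG e unfolding UCb_def by (meson half_gt_zero)
    have "absv (fint p absv (h a) - fint p absv (h b)) < e"
      if d: "\<forall>l. int (p ^ N) dvd (int (b l) - int (a l))" for a b
    proof -
      have "absv (fint p absv (h a) - fint p absv (h b)) \<le> e / 2"
      proof (rule conv_close[OF fint_conv[OF uch] fint_conv[OF uch]])
        fix M
        have "fS (h a) M - fS (h b) M = (\<Sum>y<p^M. (h a (of_nat y) - h b (of_nat y)) * (-1) ^ y)"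
          by (simp add: fS_def sum_subtractf left_diff_distrib)
        also have "absv \<dots> \<le> e / 2"
        proof (intro ab_sum_le)
          fix y
          have "\<forall>l. int (p ^ N) dvd (int ((b(Suc k := y)) l) - int ((a(Suc k := y)) l))" using d by auto
          then have "absv (G (a(Suc k := y)) - G (b(Suc k := y))) < e / 2" using N by blast
          then show "absv ((h a (of_nat y) - h b (of_nat y)) * (-1) ^ y) \<le> e / 2"
            by (simp add: ab_sign1 hn)
        qed (use e in auto)
        finally show "absv (fS (h a) M - fS (h b) M) \<le> e / 2" .
      qed
      then show ?thesis using e by simp
    qed
    then show ?thesis by blast
  qed
  show ?case unfolding UCb_def eq using bnd uc by blast
qed

lemma fmint_lin:
  assumes "finite I" "\<And>i. i \<in> I \<Longrightarrow> UCb (Fn (F i))"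
  shows "fmint p absv k (\<lambda>ys. \<Sum>i\<in>I. c i * F i ys) (nf a) = (\<Sum>i\<in>I. c i * fmint p absv k (F i) (nf a))"
proof (induction k arbitrary: a)
  case 0 then show ?case by simp
next
  case (Suc k)
  have "fmint p absv (Suc k) (\<lambda>ys. \<Sum>i\<in>I. c i * F i ys) (nf a)
      = fint p absv (\<lambda>y. fmint p absv k (\<lambda>ys. \<Sum>i\<in>I. c i * F i ys) ((nf a)(Suc k := y)))" by simp
  also have "\<dots> = fint p absv (\<lambda>y. \<Sum>i\<in>I. c i * fmint p absv k (F i) ((nf a)(Suc k := y)))"
    by (rule fint_cong) (simp only: nf_upd Suc.IH)
  also have "\<dots> = (\<Sum>i\<in>I. c i * fint p absv (\<lambda>y. fmint p absv k (F i) ((nf a)(Suc k := y))))"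
  proof (rule fint_lin[OF assms(1)])
    fix i assume "i \<in> I"
    then have "UCb (\<lambda>a. fmint p absv k (F i) (nf a))" using fmint_UC assms(2) by blast
    then show "UC1 (\<lambda>y. fmint p absv k (F i) ((nf a)(Suc k := y)))"
      by (rule UCb_UC1) (simp add: nf_upd)
  qed
  also have "\<dots> = (\<Sum>i\<in>I. c i * fmint p absv (Suc k) (F i) (nf a))" by simp
  finally show ?case .
qed

lemma fmint_cong:
  assumes "\<And>zs. F1 (\<lambda>l. if 1 \<le> l \<and> l \<le> k then zs l else ys1 l) = F2 (\<lambda>l. if 1 \<le> l \<and> l \<le> k then zs l else ys2 l)"
  shows "fmint p absv k F1 ys1 = fmint p absv k F2 ys2"
  using assms
proof (induction k arbitrary: ys1 ys2)
  case 0
  have "(\<lambda>l. if 1 \<le> l \<and> l \<le> (0::nat) then zs l else ys l) = ys" for zs ys :: "nat \<Rightarrow> 'a"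
    by (auto simp: fun_eq_iff)
  then show ?case using 0[of ys1] by simp
next
  case (Suc k)
  have "fmint p absv k F1 (ys1(Suc k := y)) = fmint p absv k F2 (ys2(Suc k := y))" for y
  proof (rule Suc.IH)
    fix zs
    have e1: "(\<lambda>l. if 1 \<le> l \<and> l \<le> k then zs l else (ys1(Suc k := y)) l)
        = (\<lambda>l. if 1 \<le> l \<and> l \<le> Suc k then (zs(Suc k := y)) l else ys1 l)"
      by (auto simp: fun_eq_iff)
    have e2: "(\<lambda>l. if 1 \<le> l \<and> l \<le> k then zs l else (ys2(Suc k := y)) l)
        = (\<lambda>l. if 1 \<le> l \<and> l \<le> Suc k then (zs(Suc k := y)) l else ys2 l)"
      by (auto simp: fun_eq_iff)
    show "F1 (\<lambda>l. if 1 \<le> l \<and> l \<le> k then zs l else (ys1(Suc k := y)) l) =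
          F2 (\<lambda>l. if 1 \<le> l \<and> l \<le> k then zs l else (ys2(Suc k := y)) l)"
      unfolding e1 e2 by (rule Suc.prems)
  qed
  then show ?case by simp
qed

definition sub :: "nat \<Rightarrow> nat \<Rightarrow> (nat \<Rightarrow> nat) \<Rightarrow> (nat \<Rightarrow> 'a) \<Rightarrow> nat \<Rightarrow> 'a" where
  "sub k w j ys = (\<lambda>l. if 1 \<le> l \<and> l \<le> k then of_nat (j l) + of_nat w * ys l else ys l)"

lemma UCb_sub: assumes "UCb (Fn F)" shows "UCb (Fn (\<lambda>ys. F (sub k w j ys)))"
proof -
  define \<sigma> where "\<sigma> a = (\<lambda>l. if 1 \<le> l \<and> l \<le> k then j l + w * a l else a l)" for a
  have e: "Fn (\<lambda>ys. F (sub k w j ys)) a = Fn F (\<sigma> a)" for a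
    by (simp add: Fn_def nf_def sub_def \<sigma>_def fun_eq_iff if_distrib cong: if_cong)
  obtain B where B: "\<forall>a. absv (Fn F a) \<le> B" using assms unfolding UCb_def by blast
  have "\<exists>N. \<forall>a b. (\<forall>l. int (p ^ N) dvd (int (b l) - int (a l))) \<longrightarrow> absv (Fn F (\<sigma> a) - Fn F (\<sigma> b)) < e"
    if e: "e > 0" for e
  proof -
    obtain N where N: "\<forall>a b. (\<forall>l. int (p ^ N) dvd (int (b l) - int (a l))) \<longrightarrow> absv (Fn F a - Fn F b) < e"
      using assms e unfolding UCb_def by blast
    have "absv (Fn F (\<sigma> a) - Fn F (\<sigma> b)) < e" if d: "\<forall>l. int (p ^ N) dvd (int (b l) - int (a l))" for a b
    proof -
      have "int (p ^ N) dvd (int (\<sigma> b l) - int (\<sigma> a l))" for l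
      proof (cases "1 \<le> l \<and> l \<le> k")
        case True
        have "int (\<sigma> b l) - int (\<sigma> a l) = int w * (int (b l) - int (a l))"
          using True by (simp add: \<sigma>_def algebra_simps)
        then show ?thesis using d by simp
      next
        case False
        then have "\<sigma> b l = b l" "\<sigma> a l = a l" by (auto simp: \<sigma>_def)
        then show ?thesis using d by simp
      qed
      then show ?thesis using N by blast
    qed
    then show ?thesis by blast
  qed
  then show ?thesis unfolding UCb_def e using B by blast
qed

lemma sum_PiE_Suc:
  "(\<Sum>j\<in>{1..Suc k} \<rightarrow>\<^sub>E {0..<(w::nat)}. f j) = (\<Sum>t<w. \<Sum>j\<in>{1..k} \<rightarrow>\<^sub>E {0..<w}. f (j(Suc k := t)))"
proof -
  have "{1..Suc k} = insert (Suc k) {1..k}" by auto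
  then have "(\<Sum>j\<in>{1..Suc k} \<rightarrow>\<^sub>E {0..<w}. f j)
      = (\<Sum>j\<in>(\<lambda>(y, g). g(Suc k := y)) ` ({0..<w} \<times> ({1..k} \<rightarrow>\<^sub>E {0..<w})). f j)"
    by (simp add: PiE_insert_eq)
  also have "\<dots> = (\<Sum>x\<in>{0..<w} \<times> ({1..k} \<rightarrow>\<^sub>E {0..<w}). f ((\<lambda>(y, g). g(Suc k := y)) x))"
    by (rule sum.reindex[OF inj_combinator[of "Suc k" "{1..k}" "\<lambda>_. {0..<w}"], unfolded comp_def]) auto
  also have "\<dots> = (\<Sum>(t, j)\<in>{0..<w} \<times> ({1..k} \<rightarrow>\<^sub>E {0..<w}). f (j(Suc k := t)))"
    by (simp add: split_def)
  also have "\<dots> = (\<Sum>t\<in>{0..<w}. \<Sum>j\<in>{1..k} \<rightarrow>\<^sub>E {0..<w}. f (j(Suc k := t)))"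
    by (rule sum.cartesian_product[symmetric])
  also have "\<dots> = (\<Sum>t<w. \<Sum>j\<in>{1..k} \<rightarrow>\<^sub>E {0..<w}. f (j(Suc k := t)))"
    by (rule sum.cong) auto
  finally show ?thesis .
qed

lemma fmint_mult:
  assumes "UCb (Fn F)" "odd w"
  shows "fmint p absv k F (nf a) = (\<Sum>j\<in>{1..k} \<rightarrow>\<^sub>E {0..<w}. (-1) ^ (\<Sum>l=1..k. j l) * fmint p absv k (\<lambda>ys. F (sub k w j ys)) (nf a))"
proof (induction k arbitrary: a)
  case 0
  have "sub 0 w j ys = ys" for j ys by (simp add: sub_def fun_eq_iff)
  then show ?case by simp
next
  case (Suc k)
  let ?P = "{1..k} \<rightarrow>\<^sub>E {0..<w}"
  define g where "g j = (\<lambda>y. fmint p absv k (\<lambda>ys. F (sub k w j ys)) ((nf a)(Suc k := y)))" for j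
  have ucg: "UC1 (g j)" for j
  proof -
    have "UCb (\<lambda>a. fmint p absv k (\<lambda>ys. F (sub k w j ys)) (nf a))"
      by (intro fmint_UC UCb_sub assms(1))
    then show ?thesis unfolding g_def by (rule UCb_UC1) (simp add: nf_upd)
  qed
  have "fmint p absv (Suc k) F (nf a) = fint p absv (\<lambda>y. fmint p absv k F ((nf a)(Suc k := y)))" by simp
  also have "\<dots> = fint p absv (\<lambda>y. \<Sum>j\<in>?P. (-1) ^ (\<Sum>l=1..k. j l) * g j y)"
    by (rule fint_cong) (simp only: nf_upd Suc.IH g_def)
  also have "\<dots> = (\<Sum>j\<in>?P. (-1) ^ (\<Sum>l=1..k. j l) * fint p absv (g j))"
    by (rule fint_lin) (auto intro: ucg finite_PiE)
  also have "\<dots> = (\<Sum>j\<in>?P. \<Sum>t<w. (-1) ^ (\<Sum>l=1..k. j l) * ((-1) ^ t * fint p absv (\<lambda>y. g j (of_nat t + of_nat w * y))))"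
    using fint_mult1[OF ucg assms(2)] by (simp add: sum_distrib_left)
  also have "\<dots> = (\<Sum>j\<in>?P. \<Sum>t<w. (-1) ^ (\<Sum>l=1..Suc k. (j(Suc k := t)) l) *
        fmint p absv (Suc k) (\<lambda>ys. F (sub (Suc k) w (j(Suc k := t)) ys)) (nf a))"
  proof (intro sum.cong refl)
    fix j t assume j: "j \<in> ?P"
    have s: "(\<Sum>l=1..Suc k. (j(Suc k := t)) l) = (\<Sum>l=1..k. j l) + t"
      by (simp add: sum.atLeast_Suc_atMost_Suc_shift)
    have "fint p absv (\<lambda>y. g j (of_nat t + of_nat w * y))
        = fmint p absv (Suc k) (\<lambda>ys. F (sub (Suc k) w (j(Suc k := t)) ys)) (nf a)"
    proof -
      have "g j (of_nat t + of_nat w * y) = fmint p absv k (\<lambda>ys. F (sub (Suc k) w (j(Suc k := t)) ys)) ((nf a)(Suc k := y))" for y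
        unfolding g_def
        by (rule fmint_cong) (rule arg_cong[where f = F], auto simp: sub_def fun_eq_iff)
      then show ?thesis by simp
    qed
    then show "(-1) ^ (\<Sum>l=1..k. j l) * ((-1) ^ t * fint p absv (\<lambda>y. g j (of_nat t + of_nat w * y)))
        = (-1) ^ (\<Sum>l=1..Suc k. (j(Suc k := t)) l) *
          fmint p absv (Suc k) (\<lambda>ys. F (sub (Suc k) w (j(Suc k := t)) ys)) (nf a)"
      by (simp add: s power_add)
  qed
  also have "\<dots> = (\<Sum>j\<in>{1..Suc k} \<rightarrow>\<^sub>E {0..<w}. (-1) ^ (\<Sum>l=1..Suc k. j l) *
        fmint p absv (Suc k) (\<lambda>ys. F (sub (Suc k) w j ys)) (nf a))"
    by (subst sum_PiE_Suc) (rule sum.swap)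
  finally show ?case .
qed

end

context cpx begin

lemma unit_of_close: assumes "absv (1 - z) < 1" shows "absv z = 1" "z \<noteq> 0"
proof -
  have "absv z \<le> max (absv 1) (absv (1 - z))" using ab_diff[of 1 "1 - z"] by simp
  then have a: "absv z \<le> 1" using assms ab_one by simp
  have "absv 1 \<le> max (absv z) (absv (1 - z))" using ab_ultra[of z "1 - z"] by simp
  then have "1 \<le> absv z" using assms ab_one by (simp add: le_max_iff_disj)
  with a show "absv z = 1" by simp
  then show "z \<noteq> 0" by auto
qed

lemma unit_power: "absv z = 1 \<Longrightarrow> absv (z ^ k) = 1" by (simp add: ab_power)

lemma unit_powi: assumes "absv z = 1" shows "absv (z powi k) = 1"
  using assms by (simp add: power_int_def ab_power ab_inverse)

lemma close_power: assumes "absv (1 - z) < 1" shows "absv (1 - z ^ k) \<le> absv (1 - z)"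
proof (induction k)
  case 0 then show ?case using ab_nonneg by simp
next
  case (Suc k)
  have eq: "1 - z ^ Suc k = (1 - z ^ k) + z ^ k * (1 - z)" by (simp add: algebra_simps)
  have "absv (1 - z ^ Suc k) \<le> max (absv (1 - z ^ k)) (absv (z ^ k * (1 - z)))"
    unfolding eq by (rule ab_ultra)
  moreover have "absv (z ^ k * (1 - z)) = absv (1 - z)"
    using unit_of_close[OF assms] by (simp add: ab_mult ab_power)
  ultimately show ?case using Suc by simp
qed

lemma close_powi: assumes "absv (1 - z) < 1" shows "absv (1 - z powi k) \<le> absv (1 - z)"
proof (cases "k \<ge> 0")
  case True then show ?thesis using close_power[OF assms] by (simp add: power_int_def)
next
  case False
  define w where "w = z ^ nat (-k)"
  have w1: "absv w = 1" using unit_of_close[OF assms] by (simp add: w_def ab_power)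
  then have wnz: "w \<noteq> 0" by auto
  have "z powi k = inverse w" using False by (simp add: power_int_def w_def power_inverse)
  moreover have "1 - inverse w = (w - 1) * inverse w" using wnz by (simp add: field_simps)
  moreover have "absv (w - 1) = absv (1 - w)" by (rule ab_sym)
  moreover have "absv (1 - w) \<le> absv (1 - z)" unfolding w_def by (rule close_power[OF assms])
  ultimately show ?thesis using w1 by (simp add: ab_mult ab_inverse)
qed

lemma ppow_step:
  assumes c0: "absv (1 - z) \<le> c0" "c0 < 1"
  shows "absv (1 - z ^ p) \<le> absv (1 - z) * max (1 / real p) (c0 ^ (p - 1))"
proof -
  define t where "t = z - 1"
  define c where "c = absv (1 - z)"
  define d where "d = max (1 / real p) (c0 ^ (p - 1))"
  have ct: "absv t = c" unfolding t_def c_def by (rule ab_sym)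
  have c_ge: "0 \<le> c" unfolding c_def by (rule ab_nonneg)
  have c_le: "c \<le> c0" "c < 1" using c0 unfolding c_def by auto
  have d0: "0 \<le> d" unfolding d_def by (simp add: le_max_iff_disj)
  have "z ^ p = (t + 1) ^ p" by (simp add: t_def)
  also have "\<dots> = (\<Sum>k\<le>p. of_nat (p choose k) * t ^ k)" by (simp add: binomial_ring)
  finally have zp: "z ^ p - 1 = (\<Sum>k\<le>p. of_nat (p choose k) * t ^ k - (if k = 0 then 1 else 0))"
    by (simp add: sum_subtractf)
  have "absv (\<Sum>k\<le>p. of_nat (p choose k) * t ^ k - (if k = 0 then 1 else 0)) \<le> c * d"
  proof (rule ab_sum_le)
    fix k assume k: "k \<in> {..p}"
    show "absv (of_nat (p choose k) * t ^ k - (if k = 0 then 1 else (0::'a))) \<le> c * d"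
    proof (cases "k = 0")
      case True then show ?thesis using c_ge d0 by simp
    next
      case False
      have ck: "c ^ k \<le> c" using False c_ge c_le by (metis One_nat_def less_le_not_le neq0_conv
            power_decreasing power_one_right Suc_leI)
      show ?thesis
      proof (cases "k = p")
        case True
        have "c ^ p = c * c ^ (p - 1)" using p_gt1 by (metis power_eq_if not_one_less_zero)
        also have "\<dots> \<le> c * c0 ^ (p - 1)" using c_ge c_le by (intro mult_left_mono power_mono) auto
        also have "\<dots> \<le> c * d" unfolding d_def using c_ge by (intro mult_left_mono) auto
        finally show ?thesis using True False by (simp add: ab_power ct)
      next
        case kp: False
        then have "k < p" using k by simp
        then have "p dvd (p choose k)" using False pr by (intro dvd_choose_prime) auto
        then obtain m where m: "p choose k = p * m" by blast
        have "absv (of_nat (p choose k) :: 'a) \<le> 1 / real p"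
          using ab_of_nat[of m] by (simp add: m ab_mult ab_p divide_right_mono)
        then have "absv (of_nat (p choose k) :: 'a) * c ^ k \<le> (1 / real p) * c"
          using ck c_ge ab_nonneg by (intro mult_mono) auto
        then have "absv (of_nat (p choose k) * t ^ k) \<le> (1 / real p) * c"
          by (simp add: ab_mult ab_power ct)
        also have "\<dots> \<le> d * c" unfolding d_def using c_ge by (intro mult_right_mono) auto
        finally show ?thesis using False by (simp add: mult.commute)
      qed
    qed
  qed (use c_ge d0 in auto)
  then have "absv (z ^ p - 1) \<le> c * d" using zp by simp
  then show ?thesis unfolding c_def d_def using ab_sym by metis
qed

lemma ppow_iter:
  assumes "absv (1 - z) < 1"
  shows "absv (1 - z ^ (p ^ N)) \<le> absv (1 - z) * max (1 / real p) (absv (1 - z) ^ (p - 1)) ^ N"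
proof (induction N)
  case 0 then show ?case by simp
next
  case (Suc N)
  define c0 where "c0 = absv (1 - z)"
  define d where "d = max (1 / real p) (c0 ^ (p - 1))"
  have c0: "0 \<le> c0" "c0 < 1" using assms ab_nonneg unfolding c0_def by auto
  have d: "0 \<le> d" "d \<le> 1" unfolding d_def using c0 p_gt1 by (auto intro: power_le_one simp: le_max_iff_disj)
  define w where "w = z ^ (p ^ N)"
  have w: "absv (1 - w) \<le> c0 * d ^ N" using Suc unfolding w_def c0_def d_def by simp
  have "c0 * d ^ N \<le> c0" using c0 d by (simp add: mult_left_le power_le_one)
  then have w0: "absv (1 - w) \<le> c0" using w by simp
  have "z ^ (p ^ Suc N) = w ^ p" by (simp add: w_def power_mult[symmetric] mult.commute)
  then have "absv (1 - z ^ (p ^ Suc N)) \<le> absv (1 - w) * d"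
    using ppow_step[OF w0 c0(2)] unfolding d_def by simp
  also have "\<dots> \<le> c0 * d ^ N * d" using w d by (intro mult_right_mono) auto
  also have "c0 * d ^ N * d = c0 * d ^ Suc N" by (simp add: algebra_simps)
  finally show ?case unfolding c0_def d_def .
qed

lemma cont_powi:
  assumes "absv (1 - Q) < 1" "e > 0"
  shows "\<exists>N. \<forall>m. int (p ^ N) dvd m \<longrightarrow> absv (1 - Q powi m) < e"
proof -
  define c0 where "c0 = absv (1 - Q)"
  define d where "d = max (1 / real p) (c0 ^ (p - 1))"
  have c0: "0 \<le> c0" "c0 < 1" using assms ab_nonneg unfolding c0_def by auto
  have "c0 ^ (p - 1) \<le> c0 ^ 1" using c0 p_gt1 by (intro power_decreasing) auto
  then have d: "0 \<le> d" "d < 1" unfolding d_def using c0 p_gt1 by (auto simp: le_max_iff_disj)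
  obtain N where N: "d ^ N < e" using real_arch_pow_inv[OF assms(2) d(2)] by blast
  have "absv (1 - Q powi m) < e" if m: "int (p ^ N) dvd m" for m
  proof -
    obtain k where k: "m = int (p ^ N) * k" using m by blast
    define W where "W = Q ^ (p ^ N)"
    have W: "absv (1 - W) \<le> c0 * d ^ N" using ppow_iter[OF assms(1), of N] unfolding W_def c0_def d_def .
    have dn: "d ^ N \<le> 1" using d by (intro power_le_one) auto
    have "c0 * d ^ N \<le> d ^ N" using c0 d by (simp add: mult_left_le_one_le)
    moreover have "c0 * d ^ N \<le> c0" using c0 dn by (simp add: mult_left_le)
    ultimately have W1: "absv (1 - W) < 1" "absv (1 - W) < e" using W N c0 by linarith+
    have "Q powi int (p ^ N) = W" unfolding W_def by (rule power_int_of_nat)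
    then have "Q powi m = W powi k" unfolding k by (simp only: power_int_mult)
    then show ?thesis using close_powi[OF W1(1), of k] W1(2) by simp
  qed
  then show ?thesis by blast
qed

lemma powi_close:
  assumes "absv (1 - Q) < 1" "e > 0"
  shows "\<exists>\<delta>>0. \<forall>a b. absv (of_int a - of_int b :: 'a) < \<delta> \<longrightarrow> absv (Q powi a - Q powi b) < e"
proof -
  obtain N where N: "\<forall>m. int (p ^ N) dvd m \<longrightarrow> absv (1 - Q powi m) < e" using cont_powi[OF assms] by blast
  have Q: "absv Q = 1" "Q \<noteq> 0" using unit_of_close[OF assms(1)] by auto
  have "absv (Q powi a - Q powi b) < e" if "absv (of_int a - of_int b :: 'a) < (1 / real p) ^ N" for a b
  proof -
    have "int (p ^ N) dvd (a - b)" using ab_small_dvd[of "a - b" N] that by simp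
    then have "absv (1 - Q powi (a - b)) < e" using N by blast
    moreover have "Q powi a - Q powi b = - (Q powi b * (1 - Q powi (a - b)))"
      using Q by (simp add: algebra_simps power_int_diff)
    ultimately show ?thesis using unit_powi[OF Q(1)] by (simp add: ab_uminus ab_mult)
  qed
  moreover have "(1 / real p) ^ N > 0" using p_gt1 by simp
  ultimately show ?thesis by blast
qed

lemma qpow_char:
  assumes Q: "absv (1 - Q) < 1" and z: "z \<in> Zp absv" and s: "conv (\<lambda>k. of_int (s k)) z"
  shows "conv (\<lambda>k. Q powi s k) (qpow absv Q z)"
proof -
  obtain s0 where s0: "conv (\<lambda>k. of_int (s0 k)) z" using z unfolding Zp_def by blast
  have close: "\<exists>M. \<forall>n\<ge>M. absv (Q powi s1 n - Q powi s0 n) < e"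
    if e: "e > 0" and s1: "conv (\<lambda>k. of_int (s1 k)) z" for s1 e
  proof -
    obtain \<delta> where d: "\<delta> > 0" "\<forall>a b. absv (of_int a - of_int b :: 'a) < \<delta> \<longrightarrow> absv (Q powi a - Q powi b) < e"
      using powi_close[OF Q e] by blast
    obtain M1 where M1: "\<forall>n\<ge>M1. absv (of_int (s1 n) - z) < \<delta>" using convD[OF s1 d(1)] by blast
    obtain M2 where M2: "\<forall>n\<ge>M2. absv (of_int (s0 n) - z) < \<delta>" using convD[OF s0 d(1)] by blast
    have "absv (Q powi s1 n - Q powi s0 n) < e" if n: "n \<ge> max M1 M2" for n
    proof -
      have "absv (of_int (s1 n) - of_int (s0 n) :: 'a) \<le> max (absv (of_int (s1 n) - z)) (absv (z - of_int (s0 n)))"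
        by (rule ab_tri)
      moreover have "absv (z - of_int (s0 n)) = absv (of_int (s0 n) - z)" by (rule ab_sym)
      moreover have "absv (of_int (s1 n) - z) < \<delta>" "absv (of_int (s0 n) - z) < \<delta>" using M1 M2 n by auto
      ultimately have "absv (of_int (s1 n) - of_int (s0 n) :: 'a) < \<delta>" by (metis le_less_trans max_less_iff_conj)
      then show ?thesis using d(2) by blast
    qed
    then show ?thesis by blast
  qed
  have "cauchy_abs absv (\<lambda>k. Q powi s0 k)" unfolding cauchy_abs_def
  proof (intro allI impI)
    fix e :: real assume e: "e > 0"
    obtain \<delta> where d: "\<delta> > 0" "\<forall>a b. absv (of_int a - of_int b :: 'a) < \<delta> \<longrightarrow> absv (Q powi a - Q powi b) < e"
      using powi_close[OF Q e] by blast
    obtain M where M: "\<forall>n\<ge>M. absv (of_int (s0 n) - z) < \<delta>" using convD[OF s0 d(1)] by blast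
    have "absv (Q powi s0 m - Q powi s0 n) < e" if "m \<ge> M" "n \<ge> M" for m n
    proof -
      have "absv (of_int (s0 m) - of_int (s0 n) :: 'a) \<le> max (absv (of_int (s0 m) - z)) (absv (z - of_int (s0 n)))"
        by (rule ab_tri)
      moreover have "absv (z - of_int (s0 n)) = absv (of_int (s0 n) - z)" by (rule ab_sym)
      moreover have "absv (of_int (s0 m) - z) < \<delta>" "absv (of_int (s0 n) - z) < \<delta>" using M that by auto
      ultimately have "absv (of_int (s0 m) - of_int (s0 n) :: 'a) < \<delta>" by (metis le_less_trans max_less_iff_conj)
      then show ?thesis using d(2) by blast
    qed
    then show "\<exists>M. \<forall>m\<ge>M. \<forall>n\<ge>M. absv (Q powi s0 m - Q powi s0 n) < e" by blast
  qed
  then obtain L where L: "conv (\<lambda>k. Q powi s0 k) L" using complete by blast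
  have all: "conv (\<lambda>k. Q powi s1 k) L" if s1: "conv (\<lambda>k. of_int (s1 k)) z" for s1
  proof (rule convI)
    fix e :: real assume e: "e > 0"
    obtain M1 where M1: "\<forall>n\<ge>M1. absv (Q powi s1 n - Q powi s0 n) < e" using close[OF e s1] by blast
    obtain M2 where M2: "\<forall>n\<ge>M2. absv (Q powi s0 n - L) < e" using convD[OF L e] by blast
    have "absv (Q powi s1 n - L) < e" if "n \<ge> max M1 M2" for n
    proof -
      have "absv (Q powi s1 n - L) \<le> max (absv (Q powi s1 n - Q powi s0 n)) (absv (Q powi s0 n - L))"
        by (rule ab_tri)
      moreover have "absv (Q powi s1 n - Q powi s0 n) < e" "absv (Q powi s0 n - L) < e" using M1 M2 that by auto
      ultimately show ?thesis by (metis le_less_trans max_less_iff_conj)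
    qed
    then show "\<exists>M. \<forall>n\<ge>M. absv (Q powi s1 n - L) < e" by blast
  qed
  have "qpow absv Q z = L" unfolding qpow_def
  proof (rule the_equality)
    show "\<forall>s. conv (\<lambda>k. of_int (s k)) z \<longrightarrow> conv (\<lambda>k. Q powi s k) L" using all by blast
  next
    fix y assume "\<forall>s. conv (\<lambda>k. of_int (s k)) z \<longrightarrow> conv (\<lambda>k. Q powi s k) y"
    then have "conv (\<lambda>k. Q powi s0 k) y" using s0 by blast
    then show "y = L" using L conv_unique by blast
  qed
  then show ?thesis using all[OF s] by simp
qed

end

context cpx begin

lemma Zp_int: "(of_int m :: 'a) \<in> Zp absv"
  unfolding Zp_def using conv_const[of "of_int m :: 'a"] by (intro CollectI exI[of _ "\<lambda>_. m"]) simp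

lemma Zp_nat: "(of_nat m :: 'a) \<in> Zp absv"
  using Zp_int[of "int m"] by simp

lemma Zp_add: assumes "A \<in> Zp absv" "B \<in> Zp absv" shows "A + B \<in> Zp absv"
proof -
  obtain s1 where s1: "conv (\<lambda>k. of_int (s1 k)) A" using assms(1) unfolding Zp_def by blast
  obtain s2 where s2: "conv (\<lambda>k. of_int (s2 k)) B" using assms(2) unfolding Zp_def by blast
  have "conv (\<lambda>k. of_int (s1 k + s2 k)) (A + B)" using conv_add[OF s1 s2] by simp
  then show ?thesis unfolding Zp_def by (intro CollectI exI[of _ "\<lambda>k. s1 k + s2 k"])
qed

lemma Zp_cmult: assumes "A \<in> Zp absv" shows "of_int c * A \<in> Zp absv"
proof -
  obtain s1 where s1: "conv (\<lambda>k. of_int (s1 k)) A" using assms(1) unfolding Zp_def by blast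
  have "conv (\<lambda>k. of_int (c * s1 k)) (of_int c * A)" using conv_cmult[OF s1, of "of_int c"] by simp
  then show ?thesis unfolding Zp_def by (intro CollectI exI[of _ "\<lambda>k. c * s1 k"])
qed

lemma Zp_nmult: assumes "A \<in> Zp absv" shows "of_nat c * A \<in> Zp absv"
  using Zp_cmult[OF assms, of "int c"] by simp

lemma qpow_int: assumes "absv (1 - Q) < 1" shows "qpow absv Q (of_int m) = Q powi m"
proof -
  have c: "conv (\<lambda>k. of_int ((\<lambda>_. m) k)) (of_int m :: 'a)" using conv_const by simp
  have "conv (\<lambda>k. Q powi m) (qpow absv Q (of_int m))" using qpow_char[OF assms Zp_int c] by simp
  then show ?thesis using conv_const conv_unique by metis
qed

lemma qpow_nat: assumes "absv (1 - Q) < 1" shows "qpow absv Q (of_nat m) = Q ^ m"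
  using qpow_int[OF assms, of "int m"] by simp

lemma qpow_bound: assumes "absv (1 - Q) < 1" "z \<in> Zp absv" shows "absv (qpow absv Q z) \<le> 1"
proof -
  obtain s where s: "conv (\<lambda>k. of_int (s k)) z" using assms(2) unfolding Zp_def by blast
  show ?thesis
    using conv_bound[OF qpow_char[OF assms s]] unit_powi[OF unit_of_close(1)[OF assms(1)]] by simp
qed

lemma conv_mult_b:
  assumes "conv X L" "conv Y M" "\<And>n. absv (X n) \<le> 1" "absv M \<le> 1"
  shows "conv (\<lambda>n. X n * Y n) (L * M)"
proof (rule convI)
  fix e :: real assume e: "e > 0"
  obtain M1 where M1: "\<forall>n\<ge>M1. absv (X n - L) < e" using convD[OF assms(1) e] by blast
  obtain M2 where M2: "\<forall>n\<ge>M2. absv (Y n - M) < e" using convD[OF assms(2) e] by blast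
  have "absv (X n * Y n - L * M) < e" if n: "n \<ge> max M1 M2" for n
  proof -
    have eq: "X n * Y n - L * M = X n * (Y n - M) + M * (X n - L)" by (simp add: algebra_simps)
    have "absv (X n * (Y n - M)) \<le> absv (Y n - M)"
      using assms(3)[of n] ab_nonneg by (simp add: ab_mult mult_left_le_one_le)
    moreover have "absv (M * (X n - L)) \<le> absv (X n - L)"
      using assms(4) ab_nonneg by (simp add: ab_mult mult_left_le_one_le)
    moreover have "absv (Y n - M) < e" "absv (X n - L) < e" using M1 M2 n by auto
    moreover have "absv (X n * Y n - L * M) \<le> max (absv (X n * (Y n - M))) (absv (M * (X n - L)))"
      unfolding eq by (rule ab_ultra)
    ultimately show ?thesis by (simp add: less_max_iff_disj)
  qed
  then show "\<exists>N. \<forall>n\<ge>N. absv (X n * Y n - L * M) < e" by blast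
qed

lemma qpow_add:
  assumes Q: "absv (1 - Q) < 1" and A: "A \<in> Zp absv" and B: "B \<in> Zp absv"
  shows "qpow absv Q (A + B) = qpow absv Q A * qpow absv Q B"
proof -
  obtain s1 where s1: "conv (\<lambda>k. of_int (s1 k)) A" using A unfolding Zp_def by blast
  obtain s2 where s2: "conv (\<lambda>k. of_int (s2 k)) B" using B unfolding Zp_def by blast
  have s: "conv (\<lambda>k. of_int (s1 k + s2 k)) (A + B)" using conv_add[OF s1 s2] by simp
  have Qu: "absv Q = 1" "Q \<noteq> 0" using unit_of_close[OF Q] by auto
  have c1: "conv (\<lambda>k. Q powi (s1 k + s2 k)) (qpow absv Q (A + B))"
    using qpow_char[OF Q Zp_add[OF A B] s] by simp
  have "conv (\<lambda>k. Q powi s1 k * Q powi s2 k) (qpow absv Q A * qpow absv Q B)"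
    using qpow_char[OF Q A s1] qpow_char[OF Q B s2] unit_powi[OF Qu(1)] qpow_bound[OF Q B]
    by (intro conv_mult_b) auto
  then have "conv (\<lambda>k. Q powi (s1 k + s2 k)) (qpow absv Q A * qpow absv Q B)"
    using Qu by (simp add: power_int_add)
  then show ?thesis using c1 conv_unique by blast
qed

lemma close_pow_w: assumes "absv (1 - q) < 1" shows "absv (1 - q ^ w) < 1"
  using close_power[OF assms, of w] assms by simp

lemma qpow_mult:
  assumes q: "absv (1 - q) < 1" and A: "A \<in> Zp absv"
  shows "qpow absv q (of_nat w * A) = qpow absv (q ^ w) A"
proof -
  obtain s where s: "conv (\<lambda>k. of_int (s k)) A" using A unfolding Zp_def by blast
  have ws: "conv (\<lambda>k. of_int (int w * s k)) (of_nat w * A)" using conv_cmult[OF s, of "of_nat w"] by simp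
  have c1: "conv (\<lambda>k. q powi (int w * s k)) (qpow absv q (of_nat w * A))"
    using qpow_char[OF q Zp_nmult[OF A] ws] by simp
  have c2: "conv (\<lambda>k. (q ^ w) powi s k) (qpow absv (q ^ w) A)"
    using qpow_char[OF close_pow_w[OF q] A s] .
  have "q powi (int w * s k) = (q ^ w) powi s k" for k by (simp add: power_int_mult)
  then show ?thesis using c1 c2 conv_unique by simp
qed

lemma qpow_one: assumes "z \<in> Zp absv" shows "qpow absv 1 z = 1"
proof -
  obtain s where s: "conv (\<lambda>k. of_int (s k)) z" using assms unfolding Zp_def by blast
  have "conv (\<lambda>k. (1::'a) powi s k) (qpow absv 1 z)" using qpow_char[of 1, OF _ assms s] by simp
  then show ?thesis using conv_const[of "1::'a"] conv_unique by simp
qed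

lemma qnum_add:
  assumes Q: "absv (1 - Q) < 1" and B: "B \<in> Zp absv" and C: "C \<in> Zp absv"
  shows "qnum absv Q (B + C) = qpow absv Q C * qnum absv Q B + qnum absv Q C"
proof (cases "Q = 1")
  case True then show ?thesis using qpow_one[OF C] by (simp add: qnum_def)
next
  case False
  then have "1 - Q \<noteq> 0" by simp
  then show ?thesis using qpow_add[OF Q B C] False
    by (simp add: qnum_def field_simps)
qed

lemma qnum_mult:
  assumes q: "absv (1 - q) < 1" and A: "A \<in> Zp absv"
  shows "qnum absv q (of_nat w * A) = qnum absv q (of_nat w) * qnum absv (q ^ w) A"
proof (cases "q = 1")
  case True then show ?thesis by (simp add: qnum_def)
next
  case False
  have qw: "qpow absv q (of_nat w) = q ^ w" by (rule qpow_nat[OF q])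
  have m: "qpow absv q (of_nat w * A) = qpow absv (q ^ w) A" by (rule qpow_mult[OF q A])
  show ?thesis
  proof (cases "q ^ w = 1")
    case True
    then show ?thesis using False qw m qpow_one[OF A] by (simp add: qnum_def)
  next
    case qw1: False
    then have nz: "1 - q ^ w \<noteq> 0" "1 - q \<noteq> 0" using False by auto
    define X where "X = qpow absv (q ^ w) A"
    have 1: "qnum absv q (of_nat w * A) = (1 - X) / (1 - q)" using False m by (simp add: qnum_def X_def)
    have 2: "qnum absv q (of_nat w) = (1 - q ^ w) / (1 - q)" using False qw by (simp add: qnum_def)
    have 3: "qnum absv (q ^ w) A = (1 - X) / (1 - q ^ w)" using qw1 by (simp add: qnum_def X_def)
    show ?thesis unfolding 1 2 3 using nz by simp
  qed
qed

end

context cpx begin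

lemma dvd_mono: "N1 \<le> N \<Longrightarrow> int (p ^ N) dvd x \<Longrightarrow> int (p ^ N1) dvd x"
  by (meson dvd_trans le_imp_power_dvd of_nat_dvd_iff)

lemma UCbD: "UCb G \<Longrightarrow> e > 0 \<Longrightarrow> \<exists>N. \<forall>a b. (\<forall>l. int (p ^ N) dvd (int (b l) - int (a l))) \<longrightarrow> absv (G a - G b) < e"
  unfolding UCb_def by blast

lemma UCb_bound: "UCb G \<Longrightarrow> \<exists>B>0. \<forall>a. absv (G a) \<le> B"
  unfolding UCb_def by (metis add_pos_nonneg zero_less_one ab_nonneg order_trans le_add_same_cancel2 less_eq_real_def)

lemma UCbI:
  assumes "\<And>a. absv (G a) \<le> B"
    "\<And>e. e > 0 \<Longrightarrow> \<exists>N. \<forall>a b. (\<forall>l. int (p ^ N) dvd (int (b l) - int (a l))) \<longrightarrow> absv (G a - G b) < e"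
  shows "UCb G"
  unfolding UCb_def using assms by blast

lemma UCb_const: "UCb (\<lambda>a. c)"
  by (rule UCbI[of _ "absv c"]) auto

lemma UCb_add: assumes "UCb G" "UCb H" shows "UCb (\<lambda>a. G a + H a)"
proof -
  obtain B1 where B1: "\<forall>a. absv (G a) \<le> B1" using assms(1) unfolding UCb_def by blast
  obtain B2 where B2: "\<forall>a. absv (H a) \<le> B2" using assms(2) unfolding UCb_def by blast
  show ?thesis
  proof (rule UCbI[of _ "max B1 B2"])
    fix a show "absv (G a + H a) \<le> max B1 B2"
      using ab_ultra[of "G a" "H a"] B1 B2 by (smt (verit))
  next
    fix e :: real assume e: "e > 0"
    obtain N1 where N1: "\<forall>a b. (\<forall>l. int (p ^ N1) dvd (int (b l) - int (a l))) \<longrightarrow> absv (G a - G b) < e"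
      using UCbD[OF assms(1) e] by blast
    obtain N2 where N2: "\<forall>a b. (\<forall>l. int (p ^ N2) dvd (int (b l) - int (a l))) \<longrightarrow> absv (H a - H b) < e"
      using UCbD[OF assms(2) e] by blast
    have "absv (G a + H a - (G b + H b)) < e" if d: "\<forall>l. int (p ^ max N1 N2) dvd (int (b l) - int (a l))" for a b
    proof -
      have "absv (G a - G b) < e" using N1 d dvd_mono[of N1 "max N1 N2"] by auto
      moreover have "absv (H a - H b) < e" using N2 d dvd_mono[of N2 "max N1 N2"] by auto
      moreover have "absv ((G a - G b) + (H a - H b)) \<le> max (absv (G a - G b)) (absv (H a - H b))"
        by (rule ab_ultra)
      ultimately show ?thesis by (simp add: algebra_simps less_max_iff_disj)
    qed
    then show "\<exists>N. \<forall>a b. (\<forall>l. int (p ^ N) dvd (int (b l) - int (a l))) \<longrightarrow> absv (G a + H a - (G b + H b)) < e"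
      by blast
  qed
qed

lemma UCb_mult: assumes "UCb G" "UCb H" shows "UCb (\<lambda>a. G a * H a)"
proof -
  obtain B1 where B1: "B1 > 0" "\<forall>a. absv (G a) \<le> B1" using UCb_bound[OF assms(1)] by blast
  obtain B2 where B2: "B2 > 0" "\<forall>a. absv (H a) \<le> B2" using UCb_bound[OF assms(2)] by blast
  show ?thesis
  proof (rule UCbI[of _ "B1 * B2"])
    fix a show "absv (G a * H a) \<le> B1 * B2"
      using B1 B2 ab_nonneg by (simp add: ab_mult mult_mono)
  next
    fix e :: real assume e: "e > 0"
    obtain N1 where N1: "\<forall>a b. (\<forall>l. int (p ^ N1) dvd (int (b l) - int (a l))) \<longrightarrow> absv (G a - G b) < e / B2"
      using UCbD[OF assms(1)] e B2 by (meson divide_pos_pos)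
    obtain N2 where N2: "\<forall>a b. (\<forall>l. int (p ^ N2) dvd (int (b l) - int (a l))) \<longrightarrow> absv (H a - H b) < e / B1"
      using UCbD[OF assms(2)] e B1 by (meson divide_pos_pos)
    have "absv (G a * H a - G b * H b) < e" if d: "\<forall>l. int (p ^ max N1 N2) dvd (int (b l) - int (a l))" for a b
    proof -
      have g: "absv (G a - G b) < e / B2" using N1 d dvd_mono[of N1 "max N1 N2"] by auto
      have h: "absv (H a - H b) < e / B1" using N2 d dvd_mono[of N2 "max N1 N2"] by auto
      have eq: "G a * H a - G b * H b = G a * (H a - H b) + H b * (G a - G b)" by (simp add: algebra_simps)
      have "absv (G a * (H a - H b)) \<le> B1 * absv (H a - H b)"
        using B1 ab_nonneg by (simp add: ab_mult mult_right_mono)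
      also have "\<dots> < B1 * (e / B1)" using h B1 by (intro mult_strict_left_mono) auto
      finally have 1: "absv (G a * (H a - H b)) < e" using B1 by simp
      have "absv (H b * (G a - G b)) \<le> B2 * absv (G a - G b)"
        using B2 ab_nonneg by (simp add: ab_mult mult_right_mono)
      also have "\<dots> < B2 * (e / B2)" using g B2 by (intro mult_strict_left_mono) auto
      finally have 2: "absv (H b * (G a - G b)) < e" using B2 by simp
      show ?thesis unfolding eq using ab_ultra[of "G a * (H a - H b)" "H b * (G a - G b)"] 1 2
        by (simp add: less_max_iff_disj)
    qed
    then show "\<exists>N. \<forall>a b. (\<forall>l. int (p ^ N) dvd (int (b l) - int (a l))) \<longrightarrow> absv (G a * H a - G b * H b) < e"
      by blast
  qed
qed

lemma UCb_power: assumes "UCb G" shows "UCb (\<lambda>a. G a ^ m)"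
  by (induction m) (auto intro: UCb_mult assms UCb_const)

lemma UCb_ext: "UCb G \<Longrightarrow> (\<And>a. H a = G a) \<Longrightarrow> UCb H"
  by (metis ext)

definition dvd_pres :: "((nat \<Rightarrow> nat) \<Rightarrow> int) \<Rightarrow> bool" where
  "dvd_pres f \<longleftrightarrow> (\<forall>N a b. (\<forall>l. int (p ^ N) dvd (int (b l) - int (a l))) \<longrightarrow> int (p ^ N) dvd (f b - f a))"

lemma dvd_pres_lin: "dvd_pres (\<lambda>a. cst + (\<Sum>l\<in>(L::nat set). c l * int (a l)))"
  unfolding dvd_pres_def
proof (intro allI impI)
  fix N :: nat and a b :: "nat \<Rightarrow> nat" assume d: "\<forall>l. int (p ^ N) dvd (int (b l) - int (a l))"
  have "cst + (\<Sum>l\<in>L. c l * int (b l)) - (cst + (\<Sum>l\<in>L. c l * int (a l))) = (\<Sum>l\<in>L. c l * (int (b l) - int (a l)))"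
    by (simp add: sum_subtractf right_diff_distrib)
  moreover have "int (p ^ N) dvd (\<Sum>l\<in>L. c l * (int (b l) - int (a l)))"
    using d by (intro dvd_sum) auto
  ultimately show "int (p ^ N) dvd (cst + (\<Sum>l\<in>L. c l * int (b l)) - (cst + (\<Sum>l\<in>L. c l * int (a l))))" by simp
qed

lemma UCb_powi: assumes Q: "absv (1 - Q) < 1" and f: "dvd_pres f" shows "UCb (\<lambda>a. Q powi f a)"
proof (rule UCbI[of _ 1])
  have Qu: "absv Q = 1" "Q \<noteq> 0" using unit_of_close[OF Q] by auto
  fix a show "absv (Q powi f a) \<le> 1" using unit_powi[OF Qu(1)] by simp
next
  have Qu: "absv Q = 1" "Q \<noteq> 0" using unit_of_close[OF Q] by auto
  fix e :: real assume e: "e > 0"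
  obtain N where N: "\<forall>m. int (p ^ N) dvd m \<longrightarrow> absv (1 - Q powi m) < e" using cont_powi[OF Q e] by blast
  have "absv (Q powi f a - Q powi f b) < e" if d: "\<forall>l. int (p ^ N) dvd (int (b l) - int (a l))" for a b
  proof -
    have "int (p ^ N) dvd (f b - f a)" using f d unfolding dvd_pres_def by blast
    then have "int (p ^ N) dvd (f a - f b)" by (metis dvd_diff_commute)
    then have "absv (1 - Q powi (f a - f b)) < e" using N by blast
    moreover have "Q powi f a - Q powi f b = - (Q powi f b * (1 - Q powi (f a - f b)))"
      using Qu by (simp add: algebra_simps power_int_diff)
    ultimately show ?thesis using unit_powi[OF Qu(1)] by (simp add: ab_uminus ab_mult)
  qed
  then show "\<exists>N. \<forall>a b. (\<forall>l. int (p ^ N) dvd (int (b l) - int (a l))) \<longrightarrow> absv (Q powi f a - Q powi f b) < e"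
    by blast
qed

lemma UCb_ofint: assumes f: "dvd_pres f" shows "UCb (\<lambda>a. of_int (f a) :: 'a)"
proof (rule UCbI[of _ 1])
  fix a show "absv (of_int (f a) :: 'a) \<le> 1" by (rule ab_of_int)
next
  fix e :: real assume e: "e > 0"
  have "1 / real p < 1" using p_gt1 by simp
  then obtain N where N: "(1 / real p) ^ N < e" using real_arch_pow_inv[OF e] by blast
  have "absv (of_int (f a) - of_int (f b) :: 'a) < e" if d: "\<forall>l. int (p ^ N) dvd (int (b l) - int (a l))" for a b
  proof -
    have "int (p ^ N) dvd (f b - f a)" using f d unfolding dvd_pres_def by blast
    then have "int (p ^ N) dvd (f a - f b)" by (metis dvd_diff_commute)
    then have "absv (of_int (f a - f b) :: 'a) \<le> (1 / real p) ^ N" by (rule ab_int_dvd)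
    then show ?thesis using N by simp
  qed
  then show "\<exists>N. \<forall>a b. (\<forall>l. int (p ^ N) dvd (int (b l) - int (a l))) \<longrightarrow> absv (of_int (f a) - of_int (f b) :: 'a) < e"
    by blast
qed

lemma qnum_shift:
  assumes R: "absv (1 - R) < 1" and z: "z \<in> Zp absv"
  shows "qnum absv R (z + of_int t) = R powi t * qnum absv R z + (if R = 1 then of_int t else (1 - R powi t) / (1 - R))"
  using qnum_add[OF R z Zp_int] qpow_int[OF R] by (simp add: qnum_def)

lemma UCb_form:
  assumes Q: "absv (1 - Q) < 1" and R: "absv (1 - R) < 1" and z: "z \<in> Zp absv"
    and f: "dvd_pres f" and g: "dvd_pres g"
  shows "UCb (\<lambda>a. Q powi f a * qnum absv R (z + of_int (g a)) ^ m)"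
proof -
  have "UCb (\<lambda>a. R powi g a * qnum absv R z + (if R = 1 then of_int (g a) else (1 - R powi g a) / (1 - R)))"
  proof (cases "R = 1")
    case True
    then show ?thesis using UCb_add[OF UCb_mult[OF UCb_powi[OF R g] UCb_const] UCb_ofint[OF g]] by simp
  next
    case False
    have U: "UCb (\<lambda>a. R powi g a * qnum absv R z + (1 / (1 - R) + (- 1 / (1 - R)) * R powi g a))"
      by (intro UCb_add UCb_mult UCb_powi R g UCb_const)
    have "1 - R \<noteq> 0" using False by simp
    then show ?thesis by (intro UCb_ext[OF U]) (simp add: False field_simps)
  qed
  then have "UCb (\<lambda>a. qnum absv R (z + of_int (g a)))" by (rule UCb_ext) (simp add: qnum_shift[OF R z])
  then show ?thesis by (intro UCb_mult UCb_powi Q f UCb_power)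
qed

lemma fmint_ncong:
  assumes "\<And>b. F (nf b) = G (nf b)"
  shows "fmint p absv k F (nf a) = fmint p absv k G (nf a)"
proof (induction k arbitrary: a)
  case 0 then show ?case using assms by simp
next
  case (Suc k)
  show ?case by simp (rule fint_cong, simp only: nf_upd Suc.IH)
qed

lemma fmint_scal:
  assumes "UCb (Fn F)"
  shows "fmint p absv k (\<lambda>ys. c * F ys) (nf a) = c * fmint p absv k F (nf a)"
  using fmint_lin[of "{0::nat}" "\<lambda>_. F" k "\<lambda>_. c" a] assms by simp

end

locale thm4 = cpx p absv for p and absv :: "'a::field_char_0 \<Rightarrow> real" +
  fixes q x :: 'a and h :: int and r n :: nat
  assumes q: "absv (1 - q) < 1" and xZ: "x \<in> Zp absv"
begin

definition EI :: "'a \<Rightarrow> 'a \<Rightarrow> nat \<Rightarrow> (nat \<Rightarrow> 'a) \<Rightarrow> 'a" where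
  "EI Q z m = (\<lambda>ys. qpow absv Q (\<Sum>l=1..r. of_int (h - int l) * ys l) * qnum absv Q (z + (\<Sum>l=1..r. ys l)) ^ m)"

definition PI :: "nat \<Rightarrow> nat \<Rightarrow> nat \<Rightarrow> (nat \<Rightarrow> 'a) \<Rightarrow> 'a" where
  "PI u v J = (\<lambda>ys. qpow absv (q ^ u) (\<Sum>l=1..r. of_int (h - int l) * ys l)
      * qnum absv q (of_nat u * (of_nat v * x + (\<Sum>l=1..r. ys l)) + of_nat v * of_nat J) ^ n)"

definition HI :: "nat \<Rightarrow> nat \<Rightarrow> (nat \<Rightarrow> 'a) \<Rightarrow> 'a" where
  "HI W m = (\<lambda>ys. qpow absv (q ^ W) (\<Sum>l=1..r. of_int (h - int l) * ys l)
      * qnum absv q (of_nat W * x + of_nat m + of_nat W * (\<Sum>l=1..r. ys l)) ^ n)"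

definition sj :: "(nat \<Rightarrow> nat) \<Rightarrow> nat" where "sj j = (\<Sum>l=1..r. j l)"
definition ej :: "(nat \<Rightarrow> nat) \<Rightarrow> int" where "ej j = (\<Sum>l=1..r. (h - int l) * int (j l))"

lemma sum_nf: "(\<Sum>l=1..r. nf a l) = (of_nat (sj a) :: 'a)"
  by (simp add: nf_def sj_def)

lemma esum_nf: "(\<Sum>l=1..r. of_int (h - int l) * nf a l) = (of_int (ej a) :: 'a)"
  by (simp add: nf_def ej_def)

lemma qu: "absv (1 - q ^ u) < 1" by (rule close_pow_w[OF q])

lemma dvd_pres_ej: "dvd_pres (\<lambda>a. ej a)"
  using dvd_pres_lin[where cst=0 and L="{1..r}" and c="\<lambda>l. h - int l"] by (simp add: ej_def)

lemma dvd_pres_sj: "dvd_pres (\<lambda>a. c0 + int c * int (sj a))"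
  using dvd_pres_lin[where cst=c0 and L="{1..r}" and c="\<lambda>l. int c"] by (simp add: sj_def sum_distrib_left)

lemma UCb_EI: assumes Q: "absv (1 - Q) < 1" and z: "z \<in> Zp absv" shows "UCb (Fn (EI Q z m))"
proof -
  have "UCb (\<lambda>a. Q powi ej a * qnum absv Q (z + of_int (0 + int 1 * int (sj a))) ^ m)"
    by (rule UCb_form[OF Q Q z dvd_pres_ej dvd_pres_sj])
  then show ?thesis
    by (rule UCb_ext) (simp only: Fn_def EI_def sum_nf esum_nf qpow_int[OF Q], simp)
qed

lemma UCb_PI: "UCb (Fn (PI u v J))"
proof -
  have z: "of_nat u * (of_nat v * x) \<in> Zp absv" by (intro Zp_nmult xZ)
  have "UCb (\<lambda>a. (q ^ u) powi ej a * qnum absv q (of_nat u * (of_nat v * x) + of_int (int v * int J + int u * int (sj a))) ^ n)"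
    by (rule UCb_form[OF qu q z dvd_pres_ej dvd_pres_sj])
  then show ?thesis
    by (rule UCb_ext) (simp only: Fn_def PI_def sum_nf esum_nf qpow_int[OF qu], simp add: algebra_simps)
qed

lemma UCb_HI: "UCb (Fn (HI W m))"
proof -
  have z: "of_nat W * x \<in> Zp absv" by (intro Zp_nmult xZ)
  have "UCb (\<lambda>a. (q ^ W) powi ej a * qnum absv q (of_nat W * x + of_int (int m + int W * int (sj a))) ^ n)"
    by (rule UCb_form[OF qu q z dvd_pres_ej dvd_pres_sj])
  then show ?thesis
    by (rule UCb_ext) (simp only: Fn_def HI_def sum_nf esum_nf qpow_int[OF qu], simp add: algebra_simps)
qed

end

context thm4 begin

definition dcoef :: "nat \<Rightarrow> nat \<Rightarrow> (nat \<Rightarrow> nat) \<Rightarrow> nat \<Rightarrow> 'a" where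
  "dcoef u v j i = of_nat (n choose i) * qnum absv q (of_nat v) ^ i * qnum absv q (of_nat u) ^ (n - i)
     * ((-1) ^ (sj j) * (q ^ v) powi (\<Sum>l=1..r. (int n + h - int l - int i) * int (j l))
        * qnum absv (q ^ v) (of_nat (sj j)) ^ i)"

lemma expo:
  fixes Q :: 'a
  assumes "Q \<noteq> 0" "i \<le> n"
  shows "Q powi (ej j) * (Q ^ sj j) ^ (n - i) = Q powi (\<Sum>l=1..r. (int n + h - int l - int i) * int (j l))"
proof -
  have 1: "(Q ^ sj j) ^ (n - i) = Q powi (int (sj j) * int (n - i))"
    by (simp only: of_nat_mult[symmetric] power_int_of_nat) (simp add: power_mult)
  have 2: "Q powi (ej j) * Q powi (int (sj j) * int (n - i)) = Q powi (ej j + int (sj j) * int (n - i))"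
    using assms(1) by (simp add: power_int_add)
  have "(\<Sum>l=1..r. (int n + h - int l - int i) * int (j l))
      = (\<Sum>l=1..r. (h - int l) * int (j l) + (int n - int i) * int (j l))"
    by (rule sum.cong) (auto simp: algebra_simps)
  also have "\<dots> = ej j + (int n - int i) * (\<Sum>l=1..r. int (j l))"
    by (simp only: sum.distrib ej_def sum_distrib_left)
  also have "\<dots> = ej j + int (sj j) * int (n - i)"
    using assms(2) by (simp add: sj_def of_nat_diff)
  finally have 3: "(\<Sum>l=1..r. (int n + h - int l - int i) * int (j l)) = ej j + int (sj j) * int (n - i)" .
  show ?thesis unfolding 1 2 3 ..
qed

lemma ring_aux:
  fixes s P P' Ea C V K Z U M :: 'a
  assumes "P * Z ^ m = P'"
  shows "s * P * (Ea * (C * (V * K) ^ i * (Z * (U * M)) ^ m)) = C * V ^ i * U ^ m * (s * P' * K ^ i) * (Ea * M ^ m)"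
  unfolding assms[symmetric] power_mult_distrib by (simp only: mult_ac)

lemma key_point:
  "(-1) ^ (sj j) * (q ^ v) powi (ej j) * PI u v (sj j) (nf a)
   = (\<Sum>i=0..n. dcoef u v j i * EI (q ^ u) (of_nat v * x) (n - i) (nf a))"
proof -
  define J where "J = sj j"
  define A where "A = of_nat v * x + (\<Sum>l=1..r. nf a l)"
  have AZ: "A \<in> Zp absv" unfolding A_def sum_nf by (intro Zp_add Zp_nmult xZ Zp_nat)
  define Ea where "Ea = qpow absv (q ^ u) (\<Sum>l=1..r. of_int (h - int l) * nf a l)"
  define \<alpha> where "\<alpha> = qnum absv q (of_nat v) * qnum absv (q ^ v) (of_nat J)"
  define \<beta> where "\<beta> = (q ^ v) ^ J * (qnum absv q (of_nat u) * qnum absv (q ^ u) A)"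
  have qv0: "q ^ v \<noteq> 0" using unit_of_close(2)[OF qu] .
  have "qnum absv q (of_nat u * A + of_nat v * of_nat J)
      = qpow absv q (of_nat v * of_nat J) * qnum absv q (of_nat u * A) + qnum absv q (of_nat v * of_nat J)"
    by (rule qnum_add[OF q Zp_nmult[OF AZ] Zp_nmult[OF Zp_nat]])
  also have "qpow absv q (of_nat v * of_nat J) = (q ^ v) ^ J"
    using qpow_nat[OF q, of "v * J"] by (simp add: power_mult)
  also have "qnum absv q (of_nat u * A) = qnum absv q (of_nat u) * qnum absv (q ^ u) A"
    by (rule qnum_mult[OF q AZ])
  also have "qnum absv q (of_nat v * of_nat J) = qnum absv q (of_nat v) * qnum absv (q ^ v) (of_nat J)"
    by (rule qnum_mult[OF q Zp_nat])
  finally have 1: "qnum absv q (of_nat u * A + of_nat v * of_nat J) = \<alpha> + \<beta>"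
    unfolding \<alpha>_def \<beta>_def by (simp add: add.commute)
  have 2: "(\<alpha> + \<beta>) ^ n = (\<Sum>i=0..n. of_nat (n choose i) * \<alpha> ^ i * \<beta> ^ (n - i))"
    by (simp add: binomial_ring atLeast0AtMost)
  have "(-1) ^ (sj j) * (q ^ v) powi (ej j) * PI u v (sj j) (nf a)
      = (-1) ^ J * (q ^ v) powi (ej j) * (Ea * (\<alpha> + \<beta>) ^ n)"
    unfolding PI_def Ea_def J_def[symmetric] A_def[symmetric] 1 by simp
  also have "\<dots> = (\<Sum>i=0..n. (-1) ^ J * (q ^ v) powi (ej j) * (Ea * (of_nat (n choose i) * \<alpha> ^ i * \<beta> ^ (n - i))))"
    unfolding 2 by (simp add: sum_distrib_left)
  also have "\<dots> = (\<Sum>i=0..n. dcoef u v j i * EI (q ^ u) (of_nat v * x) (n - i) (nf a))"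
  proof (rule sum.cong[OF refl])
    fix i assume "i \<in> {0..n}"
    then have i: "i \<le> n" by simp
    have e: "(q ^ v) powi (ej j) * ((q ^ v) ^ J) ^ (n - i) = (q ^ v) powi (\<Sum>l=1..r. (int n + h - int l - int i) * int (j l))"
      unfolding J_def by (rule expo[OF qv0 i])
    have EIe: "EI (q ^ u) (of_nat v * x) (n - i) (nf a) = Ea * qnum absv (q ^ u) A ^ (n - i)"
      by (simp add: EI_def Ea_def A_def)
    show "(-1) ^ J * (q ^ v) powi (ej j) * (Ea * (of_nat (n choose i) * \<alpha> ^ i * \<beta> ^ (n - i)))
        = dcoef u v j i * EI (q ^ u) (of_nat v * x) (n - i) (nf a)"
      unfolding dcoef_def \<alpha>_def \<beta>_def J_def[symmetric] EIe by (rule ring_aux[OF e])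
  qed
  finally show ?thesis .
qed

end

context thm4 begin

definition Pset :: "nat \<Rightarrow> (nat \<Rightarrow> nat) set" where "Pset w = {1..r} \<rightarrow>\<^sub>E {0..<w}"

definition Phi :: "nat \<Rightarrow> nat \<Rightarrow> 'a" where
  "Phi u v = (\<Sum>j\<in>Pset u. (-1) ^ (sj j) * (q ^ v) powi (ej j) * fmint p absv r (PI u v (sj j)) (nf (\<lambda>_. 0)))"

definition Psi :: "nat \<Rightarrow> nat \<Rightarrow> 'a" where
  "Psi u v = (\<Sum>j\<in>Pset u. \<Sum>k\<in>Pset v. (-1) ^ (sj j + sj k) * ((q ^ v) powi (ej j) * (q ^ u) powi (ej k))
      * fmint p absv r (HI (u * v) (v * sj j + u * sj k)) (nf (\<lambda>_. 0)))"

definition LHSf :: "nat \<Rightarrow> nat \<Rightarrow> 'a" where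
  "LHSf u v = (\<Sum>i=0..n. of_nat (n choose i) * qnum absv q (of_nat v) ^ i
            * qnum absv q (of_nat u) ^ (n - i)
            * Eqhr p absv (n - i) (q ^ u) h r (of_nat v * x)
            * Tqhr absv n i (q ^ v) h r u)"

lemma finite_Pset: "finite (Pset w)" unfolding Pset_def by (intro finite_PiE) auto

lemma Eqhr_EI: "Eqhr p absv m Q h r z = fmint p absv r (EI Q z m) (nf (\<lambda>_. 0))"
proof -
  have "nf (\<lambda>_. 0) = (\<lambda>_. 0 :: 'a)" by (simp add: nf_def)
  then show ?thesis by (simp add: Eqhr_def EI_def)
qed

lemma step2: "Phi u v = LHSf u v"
proof -
  have Ez: "of_nat v * x \<in> Zp absv" by (intro Zp_nmult xZ)
  have "Phi u v = (\<Sum>j\<in>Pset u. fmint p absv r (\<lambda>ys. (-1) ^ (sj j) * (q ^ v) powi (ej j) * PI u v (sj j) ys) (nf (\<lambda>_. 0)))"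
  proof -
    have sc: "fmint p absv r (\<lambda>ys. (-1) ^ (sj j) * (q ^ v) powi (ej j) * PI u v (sj j) ys) (nf (\<lambda>_. 0))
        = (-1) ^ (sj j) * (q ^ v) powi (ej j) * fmint p absv r (PI u v (sj j)) (nf (\<lambda>_. 0))" for j
      by (rule fmint_scal[OF UCb_PI])
    show ?thesis unfolding Phi_def by (simp only: sc)
  qed
  also have "\<dots> = (\<Sum>j\<in>Pset u. fmint p absv r (\<lambda>ys. \<Sum>i\<in>{0..n}. dcoef u v j i * EI (q ^ u) (of_nat v * x) (n - i) ys) (nf (\<lambda>_. 0)))"
    by (intro sum.cong refl fmint_ncong) (rule key_point)
  also have "\<dots> = (\<Sum>j\<in>Pset u. \<Sum>i\<in>{0..n}. dcoef u v j i * fmint p absv r (EI (q ^ u) (of_nat v * x) (n - i)) (nf (\<lambda>_. 0)))"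
    by (intro sum.cong refl fmint_lin) (auto intro: UCb_EI[OF qu Ez])
  also have "\<dots> = (\<Sum>i\<in>{0..n}. \<Sum>j\<in>Pset u. dcoef u v j i * fmint p absv r (EI (q ^ u) (of_nat v * x) (n - i)) (nf (\<lambda>_. 0)))"
    by (rule sum.swap)
  also have "\<dots> = LHSf u v"
    unfolding LHSf_def
  proof (rule sum.cong[OF refl])
    fix i
    show "(\<Sum>j\<in>Pset u. dcoef u v j i * fmint p absv r (EI (q ^ u) (of_nat v * x) (n - i)) (nf (\<lambda>_. 0)))
      = of_nat (n choose i) * qnum absv q (of_nat v) ^ i * qnum absv q (of_nat u) ^ (n - i)
            * Eqhr p absv (n - i) (q ^ u) h r (of_nat v * x) * Tqhr absv n i (q ^ v) h r u"
      unfolding Eqhr_EI Tqhr_def dcoef_def Pset_def sj_def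
      by (simp add: sum_distrib_left sum_distrib_right mult_ac)
  qed
  finally show ?thesis .
qed

lemma sub_point:
  "PI u v J (sub r v k (nf a)) = (q ^ u) powi (ej k) * HI (u * v) (v * J + u * sj k) (nf a)"
proof -
  have s1: "(\<Sum>l=1..r. of_int (h - int l) * sub r v k (nf a) l)
      = (\<Sum>l=1..r. of_int (h - int l) * (of_nat (k l) + of_nat v * of_nat (a l)) :: 'a)"
    by (rule sum.cong) (auto simp: sub_def nf_def)
  also have "\<dots> = of_int (\<Sum>l=1..r. (h - int l) * int (k l) + int v * ((h - int l) * int (a l)))"
    by (simp add: algebra_simps)
  also have "(\<Sum>l=1..r. (h - int l) * int (k l) + int v * ((h - int l) * int (a l))) = ej k + int v * ej a"
    by (simp add: ej_def sum.distrib sum_distrib_left)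
  finally have s1: "(\<Sum>l=1..r. of_int (h - int l) * sub r v k (nf a) l) = (of_int (ej k + int v * ej a) :: 'a)" .
  have "(\<Sum>l=1..r. sub r v k (nf a) l) = (\<Sum>l=1..r. of_nat (k l) + of_nat v * of_nat (a l) :: 'a)"
    by (rule sum.cong) (auto simp: sub_def nf_def)
  also have "\<dots> = of_nat (sj k + v * sj a)"
    by (simp add: sj_def sum.distrib sum_distrib_left)
  finally have s2: "(\<Sum>l=1..r. sub r v k (nf a) l) = (of_nat (sj k + v * sj a) :: 'a)" .
  have qu0: "q ^ u \<noteq> 0" using unit_of_close(2)[OF qu] .
  have p1: "qpow absv (q ^ u) (of_int (ej k + int v * ej a)) = (q ^ u) powi (ej k) * (q ^ (u * v)) powi (ej a)"
  proof -
    have "qpow absv (q ^ u) (of_int (ej k + int v * ej a)) = (q ^ u) powi (ej k + int v * ej a)"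
      by (rule qpow_int[OF qu])
    also have "\<dots> = (q ^ u) powi (ej k) * (q ^ u) powi (int v * ej a)"
      using qu0 by (simp add: power_int_add)
    also have "(q ^ u) powi (int v * ej a) = ((q ^ u) powi int v) powi ej a" by (rule power_int_mult)
    also have "\<dots> = (q ^ (u * v)) powi ej a" by (simp add: power_mult)
    finally show ?thesis .
  qed
  have p2: "qpow absv (q ^ (u * v)) (of_int (ej a)) = (q ^ (u * v)) powi (ej a)"
    by (rule qpow_int[OF qu])
  have arg: "of_nat u * (of_nat v * x + of_nat (sj k + v * sj a)) + of_nat v * of_nat J
      = of_nat (u * v) * x + of_nat (v * J + u * sj k) + of_nat (u * v) * (of_nat (sj a) :: 'a)"
    by (simp add: algebra_simps)
  show ?thesis
    unfolding PI_def HI_def s1 s2 sum_nf esum_nf p1 p2 arg by (simp add: mult_ac)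
qed

lemma step3: assumes v: "odd v" shows "Phi u v = Psi u v"
proof -
  have inner: "fmint p absv r (PI u v J) (nf (\<lambda>_. 0))
      = (\<Sum>k\<in>Pset v. (-1) ^ (sj k) * ((q ^ u) powi (ej k) * fmint p absv r (HI (u * v) (v * J + u * sj k)) (nf (\<lambda>_. 0))))"
    for J
  proof -
    have "fmint p absv r (PI u v J) (nf (\<lambda>_. 0))
        = (\<Sum>k\<in>Pset v. (-1) ^ (sj k) * fmint p absv r (\<lambda>ys. PI u v J (sub r v k ys)) (nf (\<lambda>_. 0)))"
      using fmint_mult[OF UCb_PI v, where k=r and a="\<lambda>_. 0"] by (simp add: Pset_def sj_def)
    also have "\<dots> = (\<Sum>k\<in>Pset v. (-1) ^ (sj k) * ((q ^ u) powi (ej k) * fmint p absv r (HI (u * v) (v * J + u * sj k)) (nf (\<lambda>_. 0))))"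
    proof (rule sum.cong[OF refl])
      fix k
      have "fmint p absv r (\<lambda>ys. PI u v J (sub r v k ys)) (nf (\<lambda>_. 0))
          = fmint p absv r (\<lambda>ys. (q ^ u) powi (ej k) * HI (u * v) (v * J + u * sj k) ys) (nf (\<lambda>_. 0))"
        by (rule fmint_ncong) (rule sub_point)
      also have "\<dots> = (q ^ u) powi (ej k) * fmint p absv r (HI (u * v) (v * J + u * sj k)) (nf (\<lambda>_. 0))"
        by (rule fmint_scal[OF UCb_HI])
      finally show "(-1) ^ (sj k) * fmint p absv r (\<lambda>ys. PI u v J (sub r v k ys)) (nf (\<lambda>_. 0))
          = (-1) ^ (sj k) * ((q ^ u) powi (ej k) * fmint p absv r (HI (u * v) (v * J + u * sj k)) (nf (\<lambda>_. 0)))"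
        by simp
    qed
    finally show ?thesis .
  qed
  show ?thesis
    unfolding Phi_def Psi_def inner
    by (simp add: sum_distrib_left power_add mult_ac)
qed

lemma sym: "Psi u v = Psi v u"
  unfolding Psi_def by (subst sum.swap) (simp add: ac_simps)

lemma main: assumes "odd w1" "odd w2" shows "LHSf w1 w2 = LHSf w2 w1"
  using step2[of w1 w2] step2[of w2 w1] step3[OF assms(2), of w1] step3[OF assms(1), of w2] sym[of w1 w2]
  by simp

end

theorem theorem4:
  fixes p :: nat and absv :: "'a::field_char_0 \<Rightarrow> real" and q x :: 'a
    and h :: int and r n w1 w2 :: nat
  assumes "prime p" and "odd p"
    and "is_Cp p absv"
    and "absv (1 - q) < 1"
    and "r \<ge> 1"
    and "odd w1" and "odd w2"
    and "x \<in> Zp absv"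
  shows "(\<Sum>i=0..n. of_nat (n choose i) * qnum absv q (of_nat w2) ^ i
            * qnum absv q (of_nat w1) ^ (n - i)
            * Eqhr p absv (n - i) (q ^ w1) h r (of_nat w2 * x)
            * Tqhr absv n i (q ^ w2) h r w1)
       = (\<Sum>i=0..n. of_nat (n choose i) * qnum absv q (of_nat w1) ^ i
            * qnum absv q (of_nat w2) ^ (n - i)
            * Eqhr p absv (n - i) (q ^ w2) h r (of_nat w1 * x)
            * Tqhr absv n i (q ^ w1) h r w2)"
proof -
  interpret T: thm4 p absv q x h r n
    by unfold_locales (use assms in auto)
  show ?thesis using T.main[OF assms(6) assms(7)] unfolding T.LHSf_def .
qed

end
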